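(* Let $F$ be a forest with connected components $F_1,\dots,F_p$, where each $F_i$ is a copy of the spider $S(2^{n_i})$ (with its own torso and leg labels). Let $\alpha:V(F)\to\mathbb{N}$ satisfy $\alpha|_{F_i}\in\mathcal{A}_{k_i}$ with $k_i\ge3$ for every $i$. For any choice of integers $1\le a_i\le k_i$, define $\beta:V(F)\to\mathbb{N}$ by $\beta|_{F_i}=\phi_{a_i}(\alpha|_{F_i})$ for each $i$. Then $X_F^\alpha+X_F^\beta\ge_{2s}0$.
   Context: $S(2^n)$: torso $v_0$, vertices $v_i,v'_i$ ($1\le i\le n$), edges $v_0v_i,v_iv'_i$. $\mathcal{A}_k$ (for $S(2^n)$): maps $\alpha$ with $\alpha(v_0)=1$, $\alpha(v_i)\le1$, $\alpha(v_i)+\alpha(v'_i)\le2$, and $\#\{j:\alpha(v_j)=1,\alpha(v'_j)=0\}=k$. For $\alpha\in\mathcal A_k$ with $\{j:\alpha(v_j)=1,\alpha(v'_j)=0\}=\{i_1<\dots<i_k\}$ and $S\subseteq\{1,\dots,k\}$, $\phi_S(\alpha)$ agrees with $\alpha$ except $\phi_S(\alpha)(v_{i_j})=2$ for $j\in S$ and $\phi_S(\alpha)(v_0)=0$; $\phi_a=\phi_{\{a\}}$. $X_G^\alpha=\sum_\kappa\prod_ix_i^{a_i}$ over maps $\kappa$ with $|\kappa(v)|=\alpha(v)$ (sets of positive integers), disjoint on edges, $a_i=\#\{v:i\in\kappa(v)\}$. $f\ge_{2s}0$ means $[s_\lambda]f\ge0$ for all partitions $\lambda$ with at most two parts. *)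

theory Defs
  imports Main
begin

datatype spv = Torso | Inner nat | Outer nat

definition spider_verts :: "nat \<Rightarrow> spv set" where
  "spider_verts n = {Torso} \<union> Inner ` {1..n} \<union> Outer ` {1..n}"

definition spider_adj :: "nat \<Rightarrow> spv \<Rightarrow> spv \<Rightarrow> bool" where
  "spider_adj n u v \<longleftrightarrow> (\<exists>j\<in>{1..n}.
      (u = Torso \<and> v = Inner j) \<or> (u = Inner j \<and> v = Torso) \<or>
      (u = Inner j \<and> v = Outer j) \<or> (u = Outer j \<and> v = Inner j))"

definition spJ :: "nat \<Rightarrow> (spv \<Rightarrow> nat) \<Rightarrow> nat set" where
  "spJ n \<alpha> = {j\<in>{1..n}. \<alpha> (Inner j) = 1 \<and> \<alpha> (Outer j) = 0}"

definition in_A :: "nat \<Rightarrow> nat \<Rightarrow> (spv \<Rightarrow> nat) \<Rightarrow> bool" where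
  "in_A n k \<alpha> \<longleftrightarrow> \<alpha> Torso = 1 \<and>
     (\<forall>j\<in>{1..n}. \<alpha> (Inner j) \<le> 1 \<and> \<alpha> (Inner j) + \<alpha> (Outer j) \<le> 2) \<and>
     card (spJ n \<alpha>) = k"

text \<open>phi_S: with spJ = {i_1 < ... < i_k}, set v_{i_j} to 2 for j in S and the torso to 0.
  Here i_j = (sorted_list_of_set (spJ n alpha)) ! (j-1).\<close>
definition phiS :: "nat \<Rightarrow> nat set \<Rightarrow> (spv \<Rightarrow> nat) \<Rightarrow> spv \<Rightarrow> nat" where
  "phiS n S \<alpha> u = (case u of
      Torso \<Rightarrow> 0
    | Inner j \<Rightarrow> (if j \<in> (\<lambda>t. sorted_list_of_set (spJ n \<alpha>) ! (t - 1)) ` (S \<inter> {1..card (spJ n \<alpha>)})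
                  then 2 else \<alpha> u)
    | Outer j \<Rightarrow> \<alpha> u)"

definition phi :: "nat \<Rightarrow> nat \<Rightarrow> (spv \<Rightarrow> nat) \<Rightarrow> spv \<Rightarrow> nat" where
  "phi n a \<alpha> = phiS n {a} \<alpha>"

definition forest_verts :: "nat \<Rightarrow> (nat \<Rightarrow> nat) \<Rightarrow> (nat \<times> spv) set" where
  "forest_verts p n = {(i, u). i < p \<and> u \<in> spider_verts (n i)}"

definition forest_adj :: "(nat \<Rightarrow> nat) \<Rightarrow> nat \<times> spv \<Rightarrow> nat \<times> spv \<Rightarrow> bool" where
  "forest_adj n x y \<longleftrightarrow> fst x = fst y \<and> spider_adj (n (fst x)) (snd x) (snd y)"

text \<open>A monomial x^e is given by an exponent function e (variables x_1, x_2, ...; index 0 unused).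
  The coefficient of x^e in X_G^alpha for the graph (V,E).\<close>
definition colourings :: "'v set \<Rightarrow> ('v \<Rightarrow> 'v \<Rightarrow> bool) \<Rightarrow> ('v \<Rightarrow> nat) \<Rightarrow> ('v \<Rightarrow> nat set) set" where
  "colourings V E \<alpha> = {\<kappa>.
      (\<forall>v\<in>V. finite (\<kappa> v) \<and> 0 \<notin> \<kappa> v \<and> card (\<kappa> v) = \<alpha> v) \<and>
      (\<forall>v. v \<notin> V \<longrightarrow> \<kappa> v = {}) \<and>
      (\<forall>u\<in>V. \<forall>v\<in>V. E u v \<longrightarrow> \<kappa> u \<inter> \<kappa> v = {})}"

definition Xcoef :: "'v set \<Rightarrow> ('v \<Rightarrow> 'v \<Rightarrow> bool) \<Rightarrow> ('v \<Rightarrow> nat) \<Rightarrow> (nat \<Rightarrow> nat) \<Rightarrow> int" where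
  "Xcoef V E \<alpha> e = int (card {\<kappa> \<in> colourings V E \<alpha>. \<forall>i. card {v\<in>V. i \<in> \<kappa> v} = e i})"

definition monomials :: "(nat \<Rightarrow> nat) set" where
  "monomials = {e. finite {i. e i \<noteq> 0} \<and> e 0 = 0}"

definition mdeg :: "(nat \<Rightarrow> nat) \<Rightarrow> nat" where
  "mdeg e = sum e {i. e i \<noteq> 0}"

definition is_partition :: "nat list \<Rightarrow> bool" where
  "is_partition la \<longleftrightarrow> sorted_wrt (\<ge>) la \<and> (\<forall>x\<in>set la. 0 < x)"

definition cells :: "nat list \<Rightarrow> (nat \<times> nat) set" where
  "cells la = {(r, c). r < length la \<and> c < la ! r}"

definition ssyt :: "nat list \<Rightarrow> (nat \<times> nat \<Rightarrow> nat) \<Rightarrow> bool" where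
  "ssyt la T \<longleftrightarrow>
     (\<forall>x\<in>cells la. 1 \<le> T x) \<and> (\<forall>x. x \<notin> cells la \<longrightarrow> T x = 0) \<and>
     (\<forall>r c. (r, c) \<in> cells la \<and> (r, Suc c) \<in> cells la \<longrightarrow> T (r, c) \<le> T (r, Suc c)) \<and>
     (\<forall>r c. (r, c) \<in> cells la \<and> (Suc r, c) \<in> cells la \<longrightarrow> T (r, c) < T (Suc r, c))"

definition kostka :: "nat list \<Rightarrow> (nat \<Rightarrow> nat) \<Rightarrow> nat" where
  "kostka la e = card {T. ssyt la T \<and> (\<forall>i. card {x\<in>cells la. T x = i} = e i)}"

definition schur_expansion :: "((nat \<Rightarrow> nat) \<Rightarrow> int) \<Rightarrow> (nat list \<Rightarrow> int) \<Rightarrow> bool" where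
  "schur_expansion f c \<longleftrightarrow>
     (\<forall>e\<in>monomials. f e =
        (\<Sum>\<mu>\<in>{\<mu>. is_partition \<mu> \<and> sum_list \<mu> = mdeg e}. c \<mu> * int (kostka \<mu> e)))"

text \<open>f >=_{2s} 0: f is Schur-expandable and [s_lambda] f >= 0 for all lambda with at most two parts.
  (The Schur expansion is unique, so this is the coefficient condition of the paper.)\<close>
definition ge_2s :: "((nat \<Rightarrow> nat) \<Rightarrow> int) \<Rightarrow> bool" where
  "ge_2s f \<longleftrightarrow> (\<exists>c. schur_expansion f c \<and>
      (\<forall>la. is_partition la \<and> length la \<le> 2 \<longrightarrow> 0 \<le> c la))"

end

theory Submission
  imports Defs "HOL-Computational_Algebra.Polynomial" "HOL-Library.FuncSet"
begin


definition su :: "nat \<Rightarrow> int poly \<Rightarrow> bool" where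
 "su D q \<longleftrightarrow> (\<forall>j. 0 \<le> coeff q j) \<and> (\<forall>j. D < j \<longrightarrow> coeff q j = 0) \<and>
    (\<forall>j\<le>D. coeff q (D-j) = coeff q j) \<and> (\<forall>j. 2*j+2 \<le> D \<longrightarrow> coeff q j \<le> coeff q (Suc j))"

lemma su_0: "su D 0" by (simp add: su_def)

lemma su_add: "su D p \<Longrightarrow> su D q \<Longrightarrow> su D (p+q)"
  unfolding su_def by (auto intro: add_mono add_nonneg_nonneg)

lemma su_smult: "0 \<le> c \<Longrightarrow> su D p \<Longrightarrow> su D (smult c p)"
  unfolding su_def by (auto intro: mult_left_mono)

lemma su_sum: "finite A \<Longrightarrow> (\<And>i. i\<in>A \<Longrightarrow> su D (f i)) \<Longrightarrow> su D (\<Sum>i\<in>A. f i)"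
  by (induction A rule: finite_induct) (auto intro: su_add su_0)

definition hh :: "nat \<Rightarrow> int poly" where "hh m = (\<Sum>t\<le>m. monom 1 t)"

lemma coeff_hh: "coeff (hh m) t = (if t \<le> m then 1 else 0)"
  by (simp add: hh_def coeff_sum coeff_monom)

lemma coeff_monom_mult_gen: "coeff (monom c j * q) t = (if j \<le> t then c * coeff q (t - j) else 0)"
proof (cases "j \<le> t")
  case True
  then obtain k where "t = j + k" using le_Suc_ex by blast
  then show ?thesis by (simp add: coeff_monom_mult)
next
  case False
  then show ?thesis by (simp add: coeff_mult coeff_monom)
qed

lemma su_shift: assumes "su D q" shows "su (D + 2*j) (monom 1 j * q)"
proof -
  have nn: "\<And>t. 0 \<le> coeff q t" and z: "\<And>t. D < t \<Longrightarrow> coeff q t = 0"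
    and sy: "\<And>t. t \<le> D \<Longrightarrow> coeff q (D-t) = coeff q t"
    and un: "\<And>t. 2*t+2 \<le> D \<Longrightarrow> coeff q t \<le> coeff q (Suc t)" using assms by (auto simp: su_def)
  show ?thesis unfolding su_def coeff_monom_mult_gen
  proof (intro conjI allI impI)
    fix t show "0 \<le> (if j \<le> t then 1 * coeff q (t - j) else 0)" using nn by simp
  next
    fix t assume "D + 2*j < t" then show "(if j \<le> t then 1 * coeff q (t - j) else 0) = 0" using z by simp
  next
    fix t assume t: "t \<le> D + 2*j"
    show "(if j \<le> D + 2 * j - t then 1 * coeff q (D + 2 * j - t - j) else 0) =
          (if j \<le> t then 1 * coeff q (t - j) else 0)"
    proof (cases "j \<le> t \<and> t \<le> D + j")
      case True
      then have "D + 2 * j - t - j = D - (t - j)" by auto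
      then show ?thesis using True sy[of "t-j"] by auto
    next
      case False
      then show ?thesis using z[of "D + 2 * j - t - j"] z[of "t - j"] t by auto
    qed
  next
    fix t assume t: "2*t+2 \<le> D + 2*j"
    show "(if j \<le> t then 1 * coeff q (t - j) else 0) \<le> (if j \<le> Suc t then 1 * coeff q (Suc t - j) else 0)"
    proof (cases "j \<le> t")
      case True
      then have "Suc t - j = Suc (t - j)" by auto
      then show ?thesis using True un[of "t-j"] t by auto
    next
      case False
      then show ?thesis using nn by auto
    qed
  qed
qed

lemma coeff_hh_mult: "coeff (hh m * hh n) t = int (Suc (min t m) - (t - n))"
proof -
  have "coeff (hh m * hh n) t = (\<Sum>i\<le>t. if i \<le> m \<and> t - i \<le> n then 1 else 0)"
    by (auto simp: coeff_mult coeff_hh intro!: sum.cong)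
  also have "\<dots> = int (card ({..t} \<inter> {i. i \<le> m \<and> t - i \<le> n}))"
    by (simp add: sum.If_cases)
  also have "{..t} \<inter> {i. i \<le> m \<and> t - i \<le> n} = {t - n..min t m}" by auto
  finally show ?thesis by simp
qed

lemma su_hh_mult: "su (m+n) (hh m * hh n)"
  unfolding su_def coeff_hh_mult
proof (intro conjI allI impI)
  fix j
  show "m+n < (j::nat) \<Longrightarrow> int (Suc (min j m) - (j - n)) = 0"
    unfolding min_def by (simp split: if_splits; arith)
  show "(j::nat) \<le> m+n \<Longrightarrow> int (Suc (min (m+n-j) m) - (m+n-j-n)) = int (Suc (min j m) - (j-n))"
    unfolding min_def by (simp split: if_splits; arith)
  show "2*j+2 \<le> m+(n::nat) \<Longrightarrow> int (Suc (min j m) - (j-n)) \<le> int (Suc (min (Suc j) m) - (Suc j-n))"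
    unfolding min_def by (simp split: if_splits; arith)
qed simp

definition dd :: "int poly \<Rightarrow> nat \<Rightarrow> int" where
  "dd q j = coeff q j - (if j = 0 then 0 else coeff q (j - 1))"

lemma dd_tele: "(\<Sum>j\<le>N. dd q j) = coeff q N"
  by (induction N) (auto simp: dd_def)

lemma dd_nonneg: assumes "su D q" "j \<le> D div 2" shows "0 \<le> dd q j"
proof (cases j)
  case 0
  then show ?thesis using assms by (simp add: su_def dd_def)
next
  case (Suc i)
  then have "2*i+2 \<le> D" using assms(2) by linarith
  then have "coeff q i \<le> coeff q (Suc i)" using assms(1) by (simp add: su_def)
  then show ?thesis using Suc by (simp add: dd_def)
qed

lemma su_decomp: assumes "su D q"
  shows "q = (\<Sum>j\<le>D div 2. smult (dd q j) (monom 1 j * hh (D - 2*j)))"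
proof (rule poly_eqI)
  fix t
  have z: "\<And>t. D < t \<Longrightarrow> coeff q t = 0"
    and sy: "\<And>t. t \<le> D \<Longrightarrow> coeff q (D-t) = coeff q t" using assms by (auto simp: su_def)
  have "coeff (\<Sum>j\<le>D div 2. smult (dd q j) (monom 1 j * hh (D - 2*j))) t =
        (\<Sum>j\<le>D div 2. if j \<le> t \<and> t \<le> D - j then dd q j else 0)"
    by (auto simp: coeff_sum coeff_monom_mult_gen coeff_hh intro!: sum.cong)
  also have "\<dots> = coeff q t"
  proof (cases "t \<le> D")
    case True
    define N where "N = min t (D - t)"
    have "(\<Sum>j\<le>D div 2. if j \<le> t \<and> t \<le> D - j then dd q j else 0) = (\<Sum>j\<in>{..D div 2} \<inter> {j. j \<le> N}. dd q j)"
      by (simp add: sum.If_cases N_def) (insert True, intro sum.cong, auto)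
    also have "{..D div 2} \<inter> {j. j \<le> N} = {..N}" unfolding N_def by auto
    also have "(\<Sum>j\<le>N. dd q j) = coeff q N" by (rule dd_tele)
    also have "\<dots> = coeff q t" unfolding N_def using sy[of t] True by (auto simp: min_def)
    finally show ?thesis .
  next
    case False
    then show ?thesis using z[of t] by (auto intro!: sum.neutral)
  qed
  finally show "coeff q t = coeff (\<Sum>j\<le>D div 2. smult (dd q j) (monom 1 j * hh (D - 2*j))) t" by simp
qed

lemma su_mult: assumes "su D1 p" "su D2 q" shows "su (D1+D2) (p*q)"
proof -
  have "p * q = (\<Sum>i\<le>D1 div 2. smult (dd p i) (monom 1 i * hh (D1 - 2*i))) *
                (\<Sum>j\<le>D2 div 2. smult (dd q j) (monom 1 j * hh (D2 - 2*j)))"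
    using su_decomp[OF assms(1)] su_decomp[OF assms(2)] by simp
  also have "\<dots> = (\<Sum>i\<le>D1 div 2. \<Sum>j\<le>D2 div 2. smult (dd p i) (monom 1 i * hh (D1 - 2*i)) *
       smult (dd q j) (monom 1 j * hh (D2 - 2*j)))"
    by (rule sum_product)
  finally have eq: "p * q = \<dots>" .
  show ?thesis unfolding eq
  proof (intro su_sum)
    fix i j assume "i \<in> {..D1 div 2}" and "j \<in> {..D2 div 2}"
    then have i: "i \<le> D1 div 2" and j: "j \<le> D2 div 2" by auto
    have "smult (dd p i) (monom 1 i * hh (D1 - 2*i)) * smult (dd q j) (monom 1 j * hh (D2 - 2*j))
        = smult (dd p i * dd q j) (monom 1 (i+j) * (hh (D1 - 2*i) * hh (D2 - 2*j)))"
    proof -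
      have "monom (1::int) (i+j) = monom 1 i * monom 1 j" by (simp add: mult_monom)
      then show ?thesis by (simp add: ac_simps)
    qed
    moreover have "su (D1 + D2) (monom 1 (i+j) * (hh (D1 - 2*i) * hh (D2 - 2*j)))"
    proof -
      have "su ((D1 - 2*i) + (D2 - 2*j) + 2*(i+j)) (monom 1 (i+j) * (hh (D1 - 2*i) * hh (D2 - 2*j)))"
        by (rule su_shift[OF su_hh_mult])
      moreover have "(D1 - 2*i) + (D2 - 2*j) + 2*(i+j) = D1 + D2" using i j by auto
      ultimately show ?thesis by simp
    qed
    moreover have "0 \<le> dd p i * dd q j" using dd_nonneg[OF assms(1) i] dd_nonneg[OF assms(2) j] by simp
    ultimately show "su (D1 + D2) (smult (dd p i) (monom 1 i * hh (D1 - 2*i)) * smult (dd q j) (monom 1 j * hh (D2 - 2*j)))"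
      by (simp add: su_smult)
  qed simp_all
qed

lemma su_prod: "finite A \<Longrightarrow> (\<And>i. i \<in> A \<Longrightarrow> su (d i) (f i)) \<Longrightarrow> su (\<Sum>i\<in>A. d i) (\<Prod>i\<in>A. f i)"
proof (induction A rule: finite_induct)
  case empty
  then show ?case by (simp add: su_def coeff_1)
next
  case (insert x F)
  then show ?case by (simp add: su_mult)
qed

lemma su_one: "su 0 1" by (simp add: su_def coeff_1)
lemma su_hh: "su m (hh m)" using su_hh_mult[of m 0] by (simp add: hh_def)
lemma su_monom: "su (2*j) (monom 1 j)" using su_shift[OF su_one, of j] by simp
lemma su_X: "su 2 (monom 1 1)" using su_monom[of 1] by simp
lemma su_1X: "su 1 [:1,1:]"
proof -
  have "hh 1 = [:1,1:]" by (rule poly_eqI) (simp add: coeff_hh coeff_pCons split: nat.split)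
  then show ?thesis using su_hh[of 1] by simp
qed


lemma coeff_1X_pow: "coeff ([:1,1:]^n) j = int (n choose j)"
proof (induction n arbitrary: j)
  case 0
  then show ?case by (simp add: coeff_1)
next
  case (Suc n)
  have "coeff ([:1,1:]^Suc n) j = coeff ([:1,1:]^n) j + coeff (pCons 0 ([:1,1:]^n)) j" by simp
  then show ?case using Suc by (cases j) (simp_all)
qed

lemma hh_minus: "2 \<le> n \<Longrightarrow> hh n - monom 1 1 * hh (n-2) = 1 + monom 1 n"
  by (rule poly_eqI) (auto simp: coeff_hh coeff_monom_mult_gen coeff_monom coeff_1)

lemma binom_ge2: "0 < j \<Longrightarrow> j < n \<Longrightarrow> 2 \<le> n choose j"
proof -
  assume a: "0 < j" "j < n"
  then obtain m i where m: "n = Suc m" and i: "j = Suc i" by (cases n; cases j) auto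
  have c1: "0 < m choose i" and c2: "0 < m choose Suc i" using a m i by (auto intro: zero_less_binomial)
  show ?thesis unfolding m i using c1 c2 by (simp only: binomial_Suc_Suc)
qed

definition BB :: "nat \<Rightarrow> int poly" where "BB n = monom 1 1 * hh (n - 2)"
definition RR :: "nat \<Rightarrow> int poly" where "RR n = [:1,1:]^n - hh n - BB n"

lemma su_BB: assumes "2 \<le> n" shows "su n (BB n)"
proof -
  obtain m where m: "n = m + 2" using assms le_Suc_ex by (metis add.commute)
  have "su (n - 2 + 2*1) (monom 1 1 * hh (n-2))" by (rule su_shift[OF su_hh])
  then show ?thesis using assms by (simp add: BB_def m)
qed

lemma coeff_RR: "coeff (RR n) j = int (n choose j) - (if j \<le> n then 1 else 0) - (if 1 \<le> j \<and> j - 1 \<le> n - 2 then 1 else 0)"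
  by (simp add: RR_def BB_def coeff_1X_pow coeff_hh coeff_monom_mult_gen)

lemma su_RR: assumes "2 \<le> n" shows "su n (RR n)"
  unfolding su_def coeff_RR
proof (intro conjI allI impI)
  fix j
  show "0 \<le> int (n choose j) - (if j \<le> n then 1 else 0) - (if 1 \<le> j \<and> j - 1 \<le> n - 2 then 1 else 0)"
  proof (cases "0 < j \<and> j < n")
    case True
    then show ?thesis using binom_ge2[of j n] by auto
  next
    case False
    then show ?thesis using assms by (cases "j = 0") auto
  qed
next
  fix j assume nj: "n < j"
  then have "\<not> (j - 1 \<le> n - 2)" using assms by arith
  then show "int (n choose j) - (if j \<le> n then 1 else 0) - (if 1 \<le> j \<and> j - 1 \<le> n - 2 then 1 else 0) = 0"
    using assms nj by simp
next
  fix j assume j: "j \<le> n"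
  have "n choose (n - j) = n choose j" using binomial_symmetric[OF j] by simp
  then show "int (n choose (n - j)) - (if n - j \<le> n then 1 else 0) - (if 1 \<le> n - j \<and> n - j - 1 \<le> n - 2 then 1 else 0) =
    int (n choose j) - (if j \<le> n then 1 else 0) - (if 1 \<le> j \<and> j - 1 \<le> n - 2 then 1 else 0)"
    using j assms by auto
next
  fix j assume j: "2*j+2 \<le> n"
  show "int (n choose j) - (if j \<le> n then 1 else 0) - (if 1 \<le> j \<and> j - 1 \<le> n - 2 then 1 else 0)
      \<le> int (n choose Suc j) - (if Suc j \<le> n then 1 else 0) - (if 1 \<le> Suc j \<and> Suc j - 1 \<le> n - 2 then 1 else 0)"
  proof (cases "j = 0")
    case True
    then show ?thesis using j by auto
  next
    case False
    have "n choose j \<le> n choose Suc j" using j by (intro binomial_mono) auto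
    then show ?thesis using j False by auto
  qed
qed

lemma monom_prod: "(\<Prod>i<p. (monom 1 1 :: int poly)) = monom 1 p"
  by (simp add: monom_power)

lemma ED: fixes p :: nat assumes "\<forall>i<p. 2 \<le> ns i"
  shows "su (\<Sum>i<p. ns i) ((\<Prod>i<p. hh (ns i) + BB (ns i)) + (\<Prod>i<p. hh (ns i) - BB (ns i))) \<and>
         su (\<Sum>i<p. ns i) ((\<Prod>i<p. hh (ns i) + BB (ns i)) - (\<Prod>i<p. hh (ns i) - BB (ns i)))"
  using assms
proof (induction p)
  case 0
  then show ?case using su_add[OF su_one su_one] by (simp add: su_0)
next
  case (Suc p)
  define a where "a = hh (ns p)"
  define b where "b = BB (ns p)"
  define P where "P = (\<Prod>i<p. hh (ns i) + BB (ns i))"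
  define M where "M = (\<Prod>i<p. hh (ns i) - BB (ns i))"
  define S where "S = (\<Sum>i<p. ns i)"
  have IH: "su S (P + M)" "su S (P - M)" using Suc by (auto simp: P_def M_def S_def)
  have sa: "su (ns p) a" and sb: "su (ns p) b" using Suc.prems su_hh su_BB by (auto simp: a_def b_def)
  have e1: "(a + b) * P + (a - b) * M = a * (P + M) + b * (P - M)" by (simp add: algebra_simps)
  have e2: "(a + b) * P - (a - b) * M = a * (P - M) + b * (P + M)" by (simp add: algebra_simps)
  have "su (ns p + S) (a * (P + M) + b * (P - M))"
    by (intro su_add su_mult sa sb IH)
  then have r1: "su (S + ns p) ((a + b) * P + (a - b) * M)" unfolding e1 by (metis add.commute)
  have "su (ns p + S) (a * (P - M) + b * (P + M))"
    by (intro su_add su_mult sa sb IH)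
  then have r2: "su (S + ns p) ((a + b) * P - (a - b) * M)" unfolding e2 by (metis add.commute)
  have pp: "(\<Prod>i<Suc p. hh (ns i) + BB (ns i)) = (a+b) * P" by (simp add: a_def b_def P_def mult.commute)
  have pm: "(\<Prod>i<Suc p. hh (ns i) - BB (ns i)) = (a-b) * M" by (simp add: a_def b_def M_def mult.commute)
  have ps: "(\<Sum>i<Suc p. ns i) = S + ns p" by (simp add: S_def)
  show ?case unfolding pp pm ps using r1 r2 by blast
qed

lemma core: fixes p :: nat assumes ns: "\<forall>i<p. 2 \<le> ns i" and C: "1 \<le> C"
  shows "su (\<Sum>i<p. ns i + 2) ((\<Prod>i<p. monom 1 1 * (1 + monom 1 (ns i))) + smult C (\<Prod>i<p. monom 1 1 * [:1,1:]^(ns i)))"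
proof -
  define S where "S = (\<Sum>i<p. ns i)"
  define Pp where "Pp = (\<Prod>i<p. hh (ns i) + BB (ns i))"
  define Pm where "Pm = (\<Prod>i<p. hh (ns i) - BB (ns i))"
  define P3 where "P3 = (\<Prod>i<p. hh (ns i) + BB (ns i) + RR (ns i))"
  have E: "su S (Pp + Pm)" using ED[OF ns] by (simp add: S_def Pp_def Pm_def)
  have s3: "su S P3" unfolding S_def P3_def
    using ns by (intro su_prod) (auto intro!: su_add su_hh su_BB su_RR)
  have G: "su S (P3 - Pp)" unfolding S_def P3_def Pp_def using ns
  proof (induction p)
    case 0
    then show ?case by (simp add: su_0)
  next
    case (Suc p)
    define a where "a = hh (ns p) + BB (ns p)"
    define r where "r = RR (ns p)"
    define X where "X = (\<Prod>i<p. hh (ns i) + BB (ns i) + RR (ns i))"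
    define Y where "Y = (\<Prod>i<p. hh (ns i) + BB (ns i))"
    have IH: "su (\<Sum>i<p. ns i) (X - Y)" using Suc by (simp add: X_def Y_def)
    have sY: "su (\<Sum>i<p. ns i) Y" unfolding Y_def using Suc.prems
      by (intro su_prod) (auto intro!: su_add su_hh su_BB)
    have sa: "su (ns p) (a + r)" "su (ns p) r" using Suc.prems
      by (auto simp: a_def r_def intro!: su_add su_hh su_BB su_RR)
    have e: "(a + r) * X - a * Y = (a + r) * (X - Y) + r * Y" by (simp add: algebra_simps)
    have "su (ns p + (\<Sum>i<p. ns i)) ((a + r) * (X - Y) + r * Y)"
      by (intro su_add su_mult sa IH sY)
    then have r1: "su ((\<Sum>i<p. ns i) + ns p) ((a + r) * X - a * Y)" unfolding e by (metis add.commute)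
    have px: "(\<Prod>i<Suc p. hh (ns i) + BB (ns i) + RR (ns i)) = (a + r) * X" by (simp add: a_def r_def X_def mult.commute)
    have py: "(\<Prod>i<Suc p. hh (ns i) + BB (ns i)) = a * Y" by (simp add: a_def Y_def mult.commute)
    show ?case unfolding px py using r1 by simp
  qed
  have h1: "\<And>i. i < p \<Longrightarrow> 1 + monom 1 (ns i) = hh (ns i) - BB (ns i)"
    using ns hh_minus by (simp add: BB_def)
  have h2: "\<And>i. [:1,1:]^(ns i) = hh (ns i) + BB (ns i) + RR (ns i)"
    by (simp add: RR_def)
  have "(\<Prod>i<p. monom 1 1 * (1 + monom 1 (ns i))) = (\<Prod>i<p. monom 1 1 * (hh (ns i) - BB (ns i)))"
    by (rule prod.cong) (simp_all add: h1)
  also have "\<dots> = monom 1 p * Pm" by (simp add: prod.distrib Pm_def monom_power)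
  finally have eq1: "(\<Prod>i<p. monom 1 1 * (1 + monom 1 (ns i))) = monom 1 p * Pm" .
  have eq2: "(\<Prod>i<p. monom 1 1 * [:1,1:]^(ns i)) = monom 1 p * P3"
    unfolding P3_def h2 by (simp add: prod.distrib monom_power del: pCons_one)
  have eq3: "Pm + smult C P3 = (Pp + Pm) + (P3 - Pp) + smult (C - 1) P3"
    by (simp add: algebra_simps smult_diff_left)
  have "su S ((Pp + Pm) + (P3 - Pp) + smult (C - 1) P3)"
    using C by (intro su_add E G su_smult s3) auto
  then have "su (S + 2*p) (monom 1 p * ((Pp + Pm) + (P3 - Pp) + smult (C - 1) P3))"
    by (rule su_shift)
  moreover have "(\<Sum>i<p. ns i + 2) = S + 2*p" unfolding S_def by (induction p) auto
  moreover have "(\<Prod>i<p. monom 1 1 * (1 + monom 1 (ns i))) + smult C (\<Prod>i<p. monom 1 1 * [:1,1:]^(ns i))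
     = monom 1 p * ((Pp + Pm) + (P3 - Pp) + smult (C - 1) P3)"
    unfolding eq1 eq2 eq3[symmetric] by (simp add: distrib_left)
  ultimately show ?thesis by metis
qed


definition rl :: "nat list \<Rightarrow> nat \<Rightarrow> nat" where "rl la r = (if r < length la then la ! r else 0)"

lemma cells_rl: "(r,c) \<in> cells la \<longleftrightarrow> c < rl la r" by (auto simp: cells_def rl_def)

lemma rl_mono: assumes "is_partition la" "r \<le> r'" shows "rl la r' \<le> rl la r"
proof (cases "r = r'")
  case False
  then have "r < r'" using assms by simp
  show ?thesis
  proof (cases "r' < length la")
    case True
    then have "la ! r' \<le> la ! r" using assms(1) \<open>r < r'\<close> unfolding is_partition_def
      by (metis sorted_wrt_nth_less)
    then show ?thesis using True \<open>r < r'\<close> by (simp add: rl_def)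
  qed (simp add: rl_def)
qed simp

lemma rl_len: "rl la (length la) = 0" by (simp add: rl_def)

lemma ssyt_pos: "ssyt la T \<Longrightarrow> c < rl la r \<Longrightarrow> 1 \<le> T(r,c)"
  by (simp add: ssyt_def cells_rl)
lemma ssyt_out: "ssyt la T \<Longrightarrow> \<not> c < rl la r \<Longrightarrow> T(r,c) = 0"
  by (simp add: ssyt_def cells_rl)
lemma ssyt_row: assumes "ssyt la T" "c \<le> c'" "c' < rl la r" shows "T(r,c) \<le> T(r,c')"
  using assms(2,3)
proof (induction c' rule: dec_induct)
  case base then show ?case by simp
next
  case (step m)
  then have "T(r,m) \<le> T(r,Suc m)" using assms(1) by (simp add: ssyt_def cells_rl)
  then show ?case using step by simp
qed
lemma ssyt_col: assumes "ssyt la T" "is_partition la" "c < rl la (Suc r)" shows "T(r,c) < T(Suc r,c)"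
proof -
  have "c < rl la r" using rl_mono[OF assms(2), of r "Suc r"] assms(3) by simp
  then show ?thesis using assms by (simp add: ssyt_def cells_rl)
qed

lemma downclosed_eq: assumes "finite S" "\<And>x y. x \<in> S \<Longrightarrow> y \<le> x \<Longrightarrow> y \<in> S" shows "S = {..<card S}"
proof -
  have "\<exists>k. k \<notin> S" using assms(1) by (meson ex_new_if_finite infinite_UNIV_nat)
  define k where "k = (LEAST k. k \<notin> S)"
  have kS: "k \<notin> S" unfolding k_def using \<open>\<exists>k. k \<notin> S\<close> by (rule LeastI_ex)
  have "S = {..<k}"
  proof
    show "S \<subseteq> {..<k}"
    proof
      fix x assume "x \<in> S"
      then show "x \<in> {..<k}" using assms(2)[of x k] kS by (cases "x < k") auto
    qed
    show "{..<k} \<subseteq> S" unfolding k_def using not_less_Least by auto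
  qed
  then show ?thesis by simp
qed

lemma row_prefix: assumes "ssyt la T" "\<And>y y'. P y \<Longrightarrow> y' \<le> y \<Longrightarrow> P y'"
  shows "{c. c < rl la r \<and> P (T(r,c))} = {..<card {c. c < rl la r \<and> P (T(r,c))}}"
  by (rule downclosed_eq) (auto intro: assms(2) ssyt_row[OF assms(1)])

lemma row_iff: assumes "ssyt la T" "\<And>y y'. P y \<Longrightarrow> y' \<le> y \<Longrightarrow> P y'" "c < rl la r"
  shows "P (T(r,c)) \<longleftrightarrow> c < card {c. c < rl la r \<and> P (T(r,c))}"
proof -
  have "c \<in> {c. c < rl la r \<and> P (T(r,c))} \<longleftrightarrow> c \<in> {..<card {c. c < rl la r \<and> P (T(r,c))}}"
    using row_prefix[where P=P and r=r, OF assms(1) assms(2)] by simp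
  then show ?thesis using assms(3) by simp
qed

lemma card_row_le: "card {c. c < rl la r \<and> P c} \<le> rl la r"
  using card_mono[of "{..<rl la r}" "{c. c < rl la r \<and> P c}"] by auto

lemma cells_sum: "card {x\<in>cells la. P x} = (\<Sum>r<length la. card {c. c < rl la r \<and> P (r,c)})"
proof -
  have "{x\<in>cells la. P x} = Sigma {..<length la} (\<lambda>r. {c. c < rl la r \<and> P (r,c)})"
    by (auto simp: cells_def rl_def)
  then show ?thesis by (simp add: card_SigmaI)
qed

definition tr :: "nat \<Rightarrow> nat \<Rightarrow> nat" where
  "tr i v = (if v = i then Suc i else if v = Suc i then i else v)"

lemma tr_tr[simp]: "tr i (tr i v) = v" by (simp add: tr_def)

definition Kset :: "nat list \<Rightarrow> (nat \<Rightarrow> nat) \<Rightarrow> (nat \<times> nat \<Rightarrow> nat) set" where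
  "Kset la e = {T. ssyt la T \<and> (\<forall>i. card {x\<in>cells la. T x = i} = e i)}"

lemma kostka_Kset: "kostka la e = card (Kset la e)" by (simp add: kostka_def Kset_def)

locale bkl = fixes la :: "nat list" and i :: nat assumes part: "is_partition la" and i1: "1 \<le> i"
begin

definition "Lr T r = card {c. c < rl la r \<and> T(r,c) < i}"
definition "Mr T r = card {c. c < rl la r \<and> T(r,c) \<le> i}"
definition "Rr T r = card {c. c < rl la r \<and> T(r,c) \<le> Suc i}"
definition "Ar T r = max (Lr T r) (Rr T (Suc r))"
definition "Br T r = (if r = 0 then Rr T 0 else min (Rr T r) (Lr T (r - 1)))"
definition "Mn T r = Ar T r + Br T r - Mr T r"
definition "bk T = (\<lambda>(r,c). if T(r,c) = i \<or> T(r,c) = Suc i then (if c < Mn T r then i else Suc i) else T(r,c))"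

lemma bk_app: "bk T (r,c) = (if T(r,c) = i \<or> T(r,c) = Suc i then (if c < Mn T r then i else Suc i) else T(r,c))"
  by (simp add: bk_def)

context fixes T assumes T: "ssyt la T"
begin

lemma L_iff: "c < rl la r \<Longrightarrow> T(r,c) < i \<longleftrightarrow> c < Lr T r"
  unfolding Lr_def by (rule row_iff[OF T]) auto
lemma M_iff: "c < rl la r \<Longrightarrow> T(r,c) \<le> i \<longleftrightarrow> c < Mr T r"
  unfolding Mr_def by (rule row_iff[OF T]) auto
lemma R_iff: "c < rl la r \<Longrightarrow> T(r,c) \<le> Suc i \<longleftrightarrow> c < Rr T r"
  unfolding Rr_def by (rule row_iff[OF T]) auto

lemma L_le_M: "Lr T r \<le> Mr T r" unfolding Lr_def Mr_def by (rule card_mono) auto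
lemma M_le_R: "Mr T r \<le> Rr T r" unfolding Rr_def Mr_def by (rule card_mono) auto
lemma R_le: "Rr T r \<le> rl la r" unfolding Rr_def by (rule card_row_le)

lemma R_Suc_le_M: "Rr T (Suc r) \<le> Mr T r"
proof -
  have "{..<Rr T (Suc r)} \<subseteq> {..<Mr T r}"
  proof (rule subsetI)
    fix c assume "c \<in> {..<Rr T (Suc r)}"
    then have c: "c < Rr T (Suc r)" by simp
    then have c1: "c < rl la (Suc r)" using R_le[of "Suc r"] by simp
    then have "T(Suc r, c) \<le> Suc i" using R_iff c by simp
    moreover have "T(r,c) < T(Suc r,c)" by (rule ssyt_col[OF T part c1])
    ultimately have "T(r,c) \<le> i" by linarith
    moreover have "c < rl la r" using rl_mono[OF part, of r "Suc r"] c1 by simp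
    ultimately show "c \<in> {..<Mr T r}" using M_iff by simp
  qed
  then show ?thesis by simp
qed

lemma M_Suc_le_L: "Mr T (Suc r) \<le> Lr T r"
proof -
  have "{..<Mr T (Suc r)} \<subseteq> {..<Lr T r}"
  proof (rule subsetI)
    fix c assume "c \<in> {..<Mr T (Suc r)}"
    then have c: "c < Mr T (Suc r)" by simp
    then have c1: "c < rl la (Suc r)" using M_le_R[of "Suc r"] R_le[of "Suc r"] by simp
    then have "T(Suc r, c) \<le> i" using M_iff c by simp
    moreover have "T(r,c) < T(Suc r,c)" by (rule ssyt_col[OF T part c1])
    ultimately have "T(r,c) < i" by linarith
    moreover have "c < rl la r" using rl_mono[OF part, of r "Suc r"] c1 by simp
    ultimately show "c \<in> {..<Lr T r}" using L_iff by simp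
  qed
  then show ?thesis by simp
qed

lemma A_le_M: "Ar T r \<le> Mr T r" unfolding Ar_def using L_le_M R_Suc_le_M by simp
lemma M_le_B: "Mr T r \<le> Br T r" unfolding Br_def using M_le_R M_Suc_le_L[of "r - 1"]
  by (cases r) auto
lemma B_le_R: "Br T r \<le> Rr T r" unfolding Br_def by auto
lemma L_le_A: "Lr T r \<le> Ar T r" unfolding Ar_def by auto
lemma L_le_Mn: "Lr T r \<le> Mn T r" unfolding Mn_def using L_le_A[of r] M_le_B[of r] by linarith
lemma Mn_le_R: "Mn T r \<le> Rr T r" unfolding Mn_def using A_le_M[of r] B_le_R[of r] by linarith
lemma A_le_Mn: "Ar T r \<le> Mn T r" unfolding Mn_def using M_le_B[of r] by linarith
lemma Mn_le_B: "Mn T r \<le> Br T r" unfolding Mn_def using A_le_M[of r] by linarith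

lemma bk_L: "Lr (bk T) r = Lr T r"
  unfolding Lr_def by (rule arg_cong[where f=card]) (auto simp: bk_app)
lemma bk_R: "Rr (bk T) r = Rr T r"
  unfolding Rr_def by (rule arg_cong[where f=card]) (auto simp: bk_app)

lemma bk_M: "Mr (bk T) r = Mn T r"
proof -
  have "{c. c < rl la r \<and> bk T (r,c) \<le> i} = {..<Mn T r}"
  proof (intro set_eqI iffI)
    fix c assume "c \<in> {c. c < rl la r \<and> bk T (r,c) \<le> i}"
    then have c: "c < rl la r" and b: "bk T (r,c) \<le> i" by auto
    show "c \<in> {..<Mn T r}"
    proof (cases "T(r,c) = i \<or> T(r,c) = Suc i")
      case True
      then show ?thesis using b by (auto simp: bk_app split: if_splits)
    next
      case False
      then have "T(r,c) < i" using b by (auto simp: bk_app)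
      then have "c < Lr T r" using L_iff c by simp
      then show ?thesis using L_le_Mn[of r] by simp
    qed
  next
    fix c assume "c \<in> {..<Mn T r}"
    then have cM: "c < Mn T r" by simp
    then have c: "c < rl la r" using Mn_le_R[of r] R_le[of r] by simp
    have "c < Rr T r" using cM Mn_le_R[of r] by simp
    then have "T(r,c) \<le> Suc i" using R_iff c by simp
    then show "c \<in> {c. c < rl la r \<and> bk T (r,c) \<le> i}" using c cM by (auto simp: bk_app)
  qed
  then show ?thesis unfolding Mr_def by simp
qed

lemma bk_A: "Ar (bk T) r = Ar T r" by (simp add: Ar_def bk_L bk_R)
lemma bk_B: "Br (bk T) r = Br T r" by (simp add: Br_def bk_L bk_R)

lemma T_cases: "c < rl la r \<Longrightarrow> T(r,c) = i \<longleftrightarrow> Lr T r \<le> c \<and> c < Mr T r"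
  using L_iff M_iff by force
lemma T_cases2: "c < rl la r \<Longrightarrow> T(r,c) = Suc i \<longleftrightarrow> Mr T r \<le> c \<and> c < Rr T r"
  using M_iff R_iff by force

lemma bk_ssyt: "ssyt la (bk T)"
  unfolding ssyt_def
proof (intro conjI allI impI ballI)
  fix x assume "x \<in> cells la"
  then show "1 \<le> bk T x" using T i1 by (cases x) (auto simp: bk_app ssyt_def)
next
  fix x assume "x \<notin> cells la"
  then have "T x = 0" using T by (cases x) (auto simp: ssyt_def)
  then show "bk T x = 0" using i1 by (cases x) (auto simp: bk_app)
next
  fix r c assume a: "(r, c) \<in> cells la \<and> (r, Suc c) \<in> cells la"
  then have le: "T(r,c) \<le> T(r,Suc c)" using T by (simp add: ssyt_def)
  show "bk T (r,c) \<le> bk T (r, Suc c)"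
    using le by (auto simp: bk_app)
next
  fix r c assume a: "(r, c) \<in> cells la \<and> (Suc r, c) \<in> cells la"
  then have c1: "c < rl la (Suc r)" and c0: "c < rl la r" by (auto simp: cells_rl)
  have lt: "T(r,c) < T(Suc r,c)" using T a by (simp add: ssyt_def)
  show "bk T (r,c) < bk T (Suc r, c)"
  proof (cases "(T(r,c) = i \<or> T(r,c) = Suc i) \<and> (T(Suc r,c) = i \<or> T(Suc r,c) = Suc i)")
    case True
    then have t0: "T(r,c) = i" and t1: "T(Suc r,c) = Suc i" using lt by auto
    have "c < Rr T (Suc r)" using R_iff[OF c1] t1 by simp
    then have "c < Mn T r" using A_le_Mn[of r] unfolding Ar_def by simp
    moreover have "Lr T r \<le> c" using T_cases[OF c0] t0 by simp
    then have "Mn T (Suc r) \<le> c" using Mn_le_B[of "Suc r"] unfolding Br_def by simp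
    ultimately show ?thesis using t0 t1 by (simp add: bk_app)
  next
    case False
    then show ?thesis using lt by (auto simp: bk_app)
  qed
qed

lemma bk_bk: "bk (bk T) = T"
proof -
  have "bk (bk T) (r,c) = T(r,c)" for r c
  proof (cases "T(r,c) = i \<or> T(r,c) = Suc i")
    case True
    then have c: "c < rl la r" using ssyt_out[OF T, of c r] i1 by (cases "c < rl la r") auto
    have m: "Mn (bk T) r = Mr T r"
      unfolding Mn_def bk_A bk_B bk_M using A_le_M[of r] M_le_B[of r] unfolding Mn_def by linarith
    show ?thesis using True T_cases[OF c] T_cases2[OF c] by (auto simp: bk_app m)
  next
    case False
    then show ?thesis by (auto simp: bk_app)
  qed
  then show ?thesis by auto
qed

lemma count_i: "card {c. c < rl la r \<and> T(r,c) = i} = Mr T r - Lr T r"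
proof -
  have "{c. c < rl la r \<and> T(r,c) = i} = {c. c < rl la r \<and> T(r,c) \<le> i} - {c. c < rl la r \<and> T(r,c) < i}" by auto
  moreover have "finite {c. c < rl la r \<and> T(r,c) < i}" by simp
  moreover have "{c. c < rl la r \<and> T(r,c) < i} \<subseteq> {c. c < rl la r \<and> T(r,c) \<le> i}" by auto
  ultimately show ?thesis unfolding Mr_def Lr_def by (simp only: card_Diff_subset)
qed
lemma count_Si: "card {c. c < rl la r \<and> T(r,c) = Suc i} = Rr T r - Mr T r"
proof -
  have "{c. c < rl la r \<and> T(r,c) = Suc i} = {c. c < rl la r \<and> T(r,c) \<le> Suc i} - {c. c < rl la r \<and> T(r,c) \<le> i}" by auto
  moreover have "finite {c. c < rl la r \<and> T(r,c) \<le> i}" by simp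
  moreover have "{c. c < rl la r \<and> T(r,c) \<le> i} \<subseteq> {c. c < rl la r \<and> T(r,c) \<le> Suc i}" by auto
  ultimately show ?thesis unfolding Mr_def Rr_def by (simp only: card_Diff_subset)
qed

lemma Mn_eq1: "Mn T r - Lr T r = (Ar T r - Lr T r) + (Br T r - Mr T r)"
  using L_le_A[of r] A_le_M[of r] M_le_B[of r] unfolding Mn_def by linarith
lemma R_M_eq: "Rr T r - Mr T r = (Rr T r - Br T r) + (Br T r - Mr T r)"
  using B_le_R[of r] M_le_B[of r] by linarith
lemma R_Mn_eq: "Rr T r - Mn T r = (Rr T r - Br T r) + (Br T r - Mn T r)"
  using B_le_R[of r] Mn_le_B[of r] by linarith
lemma M_L_eq: "Mr T r - Lr T r = (Ar T r - Lr T r) + (Br T r - Mn T r)"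
  using L_le_A[of r] A_le_M[of r] M_le_B[of r] unfolding Mn_def by linarith

lemma sum_AB: "(\<Sum>r<length la. Ar T r - Lr T r) = (\<Sum>r<length la. Rr T r - Br T r)"
proof (cases "length la")
  case 0 then show ?thesis by simp
next
  case (Suc m)
  have R0: "Rr T (Suc m) = 0" using R_le[of "Suc m"] rl_len[of la] Suc by simp
  have "(\<Sum>r<Suc m. Rr T r - Br T r) = (\<Sum>r<m. Rr T (Suc r) - Br T (Suc r)) + (Rr T 0 - Br T 0)"
    by (subst sum.lessThan_Suc_shift) simp
  also have "\<dots> = (\<Sum>r<m. Rr T (Suc r) - Lr T r)"
    unfolding Br_def by (auto simp: min_def intro!: sum.cong)
  also have "\<dots> = (\<Sum>r<Suc m. Rr T (Suc r) - Lr T r)" using R0 by simp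
  also have "\<dots> = (\<Sum>r<Suc m. Ar T r - Lr T r)" by (rule sum.cong) (auto simp: Ar_def max_def)
  finally show ?thesis using Suc by simp
qed

lemma bk_count: "card {x\<in>cells la. bk T x = v} = card {x\<in>cells la. T x = tr i v}"
proof -
  consider "v = i" | "v = Suc i" | "v \<noteq> i \<and> v \<noteq> Suc i" by auto
  then show ?thesis
  proof cases
    case 1
    have "card {x\<in>cells la. bk T x = v} = (\<Sum>r<length la. Mn T r - Lr T r)"
      unfolding cells_sum 1 using bkl.count_i[OF bkl_axioms bk_ssyt] by (simp add: bk_M bk_L)
    also have "\<dots> = (\<Sum>r<length la. (Ar T r - Lr T r) + (Br T r - Mr T r))"
      by (rule sum.cong) (simp_all add: Mn_eq1)
    also have "\<dots> = (\<Sum>r<length la. (Rr T r - Br T r) + (Br T r - Mr T r))"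
      by (simp add: sum.distrib sum_AB)
    also have "\<dots> = (\<Sum>r<length la. Rr T r - Mr T r)"
      by (rule sum.cong) (simp_all add: R_M_eq)
    also have "\<dots> = card {x\<in>cells la. T x = tr i v}"
      unfolding cells_sum 1 by (simp add: tr_def count_Si)
    finally show ?thesis .
  next
    case 2
    have "card {x\<in>cells la. bk T x = v} = (\<Sum>r<length la. Rr T r - Mn T r)"
      unfolding cells_sum 2 using bkl.count_Si[OF bkl_axioms bk_ssyt] by (simp add: bk_M bk_R)
    also have "\<dots> = (\<Sum>r<length la. (Rr T r - Br T r) + (Br T r - Mn T r))"
      by (rule sum.cong) (simp_all add: R_Mn_eq)
    also have "\<dots> = (\<Sum>r<length la. (Ar T r - Lr T r) + (Br T r - Mn T r))"
      by (simp add: sum.distrib sum_AB)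
    also have "\<dots> = (\<Sum>r<length la. Mr T r - Lr T r)"
      by (rule sum.cong) (simp_all add: M_L_eq)
    also have "\<dots> = card {x\<in>cells la. T x = tr i v}"
      unfolding cells_sum 2 by (simp add: tr_def count_i)
    finally show ?thesis .
  next
    case 3
    then have "{x\<in>cells la. bk T x = v} = {x\<in>cells la. T x = tr i v}"
      by (auto simp: bk_app tr_def)
    then show ?thesis by simp
  qed
qed

end

lemma bk_Kset: "T \<in> Kset la e \<Longrightarrow> bk T \<in> Kset la (e \<circ> tr i)"
  unfolding Kset_def using bk_ssyt bk_count by auto

lemma kostka_tr: "kostka la (e \<circ> tr i) = kostka la e"
proof -
  have inj: "inj_on bk (Kset la e)"
    by (rule inj_on_inverseI[where g=bk]) (auto simp: Kset_def bk_bk)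
  have "bk ` Kset la e = Kset la (e \<circ> tr i)"
  proof
    show "bk ` Kset la e \<subseteq> Kset la (e \<circ> tr i)" using bk_Kset by auto
    show "Kset la (e \<circ> tr i) \<subseteq> bk ` Kset la e"
    proof
      fix T assume a: "T \<in> Kset la (e \<circ> tr i)"
      then have "bk T \<in> Kset la (e \<circ> tr i \<circ> tr i)" by (rule bk_Kset)
      moreover have "e \<circ> tr i \<circ> tr i = e" by (auto simp: fun_eq_iff)
      moreover have "T = bk (bk T)" using a bk_bk by (auto simp: Kset_def)
      ultimately show "T \<in> bk ` Kset la e" by auto
    qed
  qed
  then show ?thesis unfolding kostka_Kset using card_image[OF inj] by simp
qed

end


definition vec :: "nat list \<Rightarrow> nat \<Rightarrow> nat" where "vec la v = (if v = 0 then 0 else rl la (v - 1))"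

lemma part_pos: "is_partition la \<Longrightarrow> r < length la \<Longrightarrow> 0 < la ! r"
  by (simp add: is_partition_def)

lemma rl_pos: "is_partition la \<Longrightarrow> 0 < rl la r \<longleftrightarrow> r < length la"
  by (auto simp: rl_def part_pos)

lemma finite_cells: "finite (cells la)"
proof -
  have "cells la = Sigma {..<length la} (\<lambda>r. {..<rl la r})" by (auto simp: cells_def rl_def)
  then show ?thesis by simp
qed

lemma vec_Suc: "vec la (Suc r) = rl la r" by (simp add: vec_def)

lemma vec_supp: assumes p: "is_partition la" shows "{v. vec la v \<noteq> 0} = Suc ` {..<length la}"
proof
  show "{v. vec la v \<noteq> 0} \<subseteq> Suc ` {..<length la}"
  proof
    fix v assume "v \<in> {v. vec la v \<noteq> 0}"
    then have vv: "vec la v \<noteq> 0" by simp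
    have "v \<noteq> 0"
    proof
      assume "v = 0" then show False using vv by (simp add: vec_def)
    qed
    then obtain r where r: "v = Suc r" using not0_implies_Suc by blast
    then have "rl la r \<noteq> 0" using vv by (simp add: vec_Suc)
    then have "r < length la" using rl_pos[OF p, of r] by simp
    then show "v \<in> Suc ` {..<length la}" using r by blast
  qed
  show "Suc ` {..<length la} \<subseteq> {v. vec la v \<noteq> 0}"
  proof
    fix v assume "v \<in> Suc ` {..<length la}"
    then obtain r where r: "v = Suc r" "r < length la" by blast
    then have "0 < rl la r" using rl_pos[OF p, of r] by simp
    then show "v \<in> {v. vec la v \<noteq> 0}" using r by (simp add: vec_Suc)
  qed
qed

lemma vec_monomial: "is_partition la \<Longrightarrow> vec la \<in> monomials"
  unfolding monomials_def using vec_supp by (auto simp: vec_def)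

lemma mdeg_vec: "is_partition la \<Longrightarrow> mdeg (vec la) = sum_list la"
proof -
  assume p: "is_partition la"
  have "mdeg (vec la) = sum (vec la) (Suc ` {..<length la})" unfolding mdeg_def vec_supp[OF p] ..
  also have "\<dots> = (\<Sum>r<length la. vec la (Suc r))" by (simp add: sum.reindex)
  also have "\<dots> = (\<Sum>r<length la. la ! r)" by (auto simp: vec_Suc rl_def intro!: sum.cong)
  also have "\<dots> = sum_list la" by (simp add: sum_list_sum_nth atLeast0LessThan)
  finally show ?thesis .
qed

lemma length_le_sum: "\<forall>x\<in>set xs. 0 < (x::nat) \<Longrightarrow> length xs \<le> sum_list xs"
  by (induction xs) auto

lemma finite_parts: "finite {la. is_partition la \<and> sum_list la = d}"
proof -
  have "{la. is_partition la \<and> sum_list la = d} \<subseteq> {xs. set xs \<subseteq> {..d} \<and> length xs \<le> d}"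
  proof
    fix la assume "la \<in> {la. is_partition la \<and> sum_list la = d}"
    then have p: "is_partition la" and d: "sum_list la = d" by auto
    have "set la \<subseteq> {..d}" using member_le_sum_list[of _ la] d by auto
    moreover have "length la \<le> d" using length_le_sum[of la] p d by (simp add: is_partition_def)
    ultimately show "la \<in> {xs. set xs \<subseteq> {..d} \<and> length xs \<le> d}" by simp
  qed
  moreover have "finite {xs. set xs \<subseteq> {..d} \<and> length xs \<le> d}"
    by (rule finite_lists_length_le) simp
  ultimately show ?thesis by (rule finite_subset)
qed

lemma mdeg_bound: "(\<forall>v. N \<le> v \<longrightarrow> e v = 0) \<Longrightarrow> mdeg e = (\<Sum>v<N. e v)"
proof -
  assume a: "\<forall>v. N \<le> v \<longrightarrow> e v = 0"
  have "{v. e v \<noteq> 0} \<subseteq> {..<N}" using a not_less by auto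
  then have "(\<Sum>v<N. e v) = sum e {v. e v \<noteq> 0}"
    by (intro sum.mono_neutral_right) auto
  then show ?thesis by (simp add: mdeg_def)
qed

lemma sum_tr: assumes "Suc i < N" shows "(\<Sum>v<N. h (tr i v)) = (\<Sum>v<N. (h v :: nat))"
  by (rule sum.reindex_bij_witness[where i="tr i" and j="tr i"]) (use assms in \<open>auto simp: tr_def\<close>)

lemma w_tr: assumes "Suc i < N"
  shows "(\<Sum>v<N. v * e (tr i v)) + e (Suc i) = (\<Sum>v<N. v * e v) + (e i :: nat)"
proof -
  have fin: "finite {..<N}" by simp
  have i: "i \<in> {..<N}" "Suc i \<in> {..<N} - {i}" using assms by auto
  have split: "(\<Sum>v<N. h v) = (\<Sum>v\<in>{..<N} - {i} - {Suc i}. h v) + h i + (h (Suc i) :: nat)" for h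
    using sum.remove[OF fin i(1), of h] sum.remove[of "{..<N} - {i}" "Suc i" h] i by simp
  have rest: "(\<Sum>v\<in>{..<N} - {i} - {Suc i}. v * e (tr i v)) = (\<Sum>v\<in>{..<N} - {i} - {Suc i}. v * e v)"
    by (rule sum.cong) (auto simp: tr_def)
  show ?thesis unfolding split[of "\<lambda>v. v * e (tr i v)"] split[of "\<lambda>v. v * e v"] rest
    by (simp add: tr_def algebra_simps)
qed

lemma antimono_step:
  assumes "\<And>m. 1 \<le> m \<Longrightarrow> Suc m < N \<Longrightarrow> e (Suc m) \<le> e m" "1 \<le> u"
  shows "u \<le> v \<Longrightarrow> v < N \<Longrightarrow> e v \<le> (e u :: nat)"
proof (induction v)
  case 0
  then show ?case using assms(2) by simp
next
  case (Suc v)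
  show ?case
  proof (cases "u = Suc v")
    case True then show ?thesis by simp
  next
    case False
    then have uv: "u \<le> v" using Suc.prems by simp
    then have "e v \<le> e u" using Suc.IH Suc.prems by simp
    moreover have "e (Suc v) \<le> e v" using assms(1)[of v] uv assms(2) Suc.prems by simp
    ultimately show ?thesis by simp
  qed
qed

lemma sort_core:
  fixes N :: nat
  shows "e 0 = 0 \<Longrightarrow> (\<forall>v. N \<le> v \<longrightarrow> e v = 0) \<Longrightarrow>
    \<exists>la. is_partition la \<and> mdeg e = sum_list la \<and>
      (\<forall>g::(nat\<Rightarrow>nat)\<Rightarrow>int. (\<forall>e'\<in>monomials. \<forall>i\<ge>1. g (e' \<circ> tr i) = g e') \<longrightarrow> g e = g (vec la))"
proof (induction "\<Sum>v<N. v * e v" arbitrary: e rule: less_induct)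
  case less
  show ?case
  proof (cases "\<exists>i. 1 \<le> i \<and> Suc i < N \<and> e i < e (Suc i)")
    case True
    then obtain i where i: "1 \<le> i" "Suc i < N" "e i < e (Suc i)" by blast
    define e' where "e' = e \<circ> tr i"
    have w: "(\<Sum>v<N. v * e' v) < (\<Sum>v<N. v * e v)"
      using w_tr[OF i(2), of e] i(3) unfolding e'_def by simp
    have e'0: "e' 0 = 0" using less.prems i(1) by (simp add: e'_def tr_def)
    have e'N: "\<forall>v. N \<le> v \<longrightarrow> e' v = 0" using less.prems i(2) by (simp add: e'_def tr_def)
    obtain la where la: "is_partition la" "mdeg e' = sum_list la"
      "\<forall>g::(nat\<Rightarrow>nat)\<Rightarrow>int. (\<forall>e'\<in>monomials. \<forall>i\<ge>1. g (e' \<circ> tr i) = g e') \<longrightarrow> g e' = g (vec la)"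
      using less.hyps[OF w e'0 e'N] by blast
    have mono: "e' \<in> monomials"
    proof -
      have "{v. e' v \<noteq> 0} \<subseteq> {..<N}" using e'N not_less by auto
      then show ?thesis unfolding monomials_def using e'0 finite_subset by auto
    qed
    have "mdeg e' = (\<Sum>v<N. e' v)" by (rule mdeg_bound[OF e'N])
    also have "\<dots> = (\<Sum>v<N. e v)" unfolding e'_def comp_def by (rule sum_tr[OF i(2)])
    also have "\<dots> = mdeg e" by (rule mdeg_bound[OF less.prems(2), symmetric])
    finally have mdeg: "mdeg e = mdeg e'" by simp
    have ee: "e = e' \<circ> tr i" by (auto simp: e'_def fun_eq_iff)
    show ?thesis
    proof (intro exI conjI allI impI)
      show "is_partition la" "mdeg e = sum_list la" using la mdeg by auto
      fix g :: "(nat\<Rightarrow>nat)\<Rightarrow>int" assume g: "\<forall>e'\<in>monomials. \<forall>i\<ge>1. g (e' \<circ> tr i) = g e'"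
      have "g (e' \<circ> tr i) = g e'" using g[rule_format, OF mono i(1)] .
      then have "g e = g e'" using ee by simp
      then show "g e = g (vec la)" using la(3) g by simp
    qed
  next
    case False
    then have dec: "\<And>i. 1 \<le> i \<Longrightarrow> Suc i < N \<Longrightarrow> e (Suc i) \<le> e i" by (meson not_le)
    have mono: "e v \<le> e u" if "1 \<le> u" "u \<le> v" "v < N" for u v
      using antimono_step[of N e u v] dec that by blast
    have ltN: "v < N" if "e v \<noteq> 0" for v
    proof (rule ccontr)
      assume "\<not> v < N"
      then have "N \<le> v" by simp
      then have "e v = 0" using less.prems(2) by simp
      then show False using that by simp
    qed
    define S where "S = {v. 0 < e (Suc v)}"
    have Sfin: "finite S"
    proof -
      have "S \<subseteq> {..<N}"
      proof
        fix v assume "v \<in> S"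
        then have "e (Suc v) \<noteq> 0" unfolding S_def by simp
        then have "Suc v < N" by (rule ltN)
        then show "v \<in> {..<N}" by simp
      qed
      then show ?thesis by (rule finite_subset) simp
    qed
    have Sdown: "y \<in> S" if "x \<in> S" "y \<le> x" for x y
    proof -
      have "e (Suc x) \<noteq> 0" using that(1) unfolding S_def by simp
      then have "Suc x < N" by (rule ltN)
      then show ?thesis using mono[of "Suc y" "Suc x"] that unfolding S_def by simp
    qed
    define K where "K = card S"
    have SK: "S = {..<K}" unfolding K_def by (rule downclosed_eq[OF Sfin Sdown])
    define la where "la = map (\<lambda>v. e (Suc v)) [0..<K]"
    have pos: "0 < e (Suc v) \<longleftrightarrow> v < K" for v
    proof -
      have "v \<in> S \<longleftrightarrow> v \<in> {..<K}" using SK by simp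
      then show ?thesis by (simp add: S_def)
    qed
    have lenla: "length la = K" by (simp add: la_def)
    have nthla: "la ! v = e (Suc v)" if "v < K" for v using that by (simp add: la_def)
    have part: "is_partition la"
      unfolding is_partition_def sorted_wrt_iff_nth_less
    proof (intro conjI allI impI ballI)
      fix a b assume ab: "a < b" "b < length la"
      then have "b < K" using lenla by simp
      have "e (Suc b) \<noteq> 0" using pos[of b] \<open>b < K\<close> by simp
      then have "Suc b < N" by (rule ltN)
      then have "e (Suc b) \<le> e (Suc a)" using mono[of "Suc a" "Suc b"] ab(1) by simp
      then show "la ! b \<le> la ! a" using nthla[of a] nthla[of b] \<open>b < K\<close> ab(1) by simp
    next
      fix x assume "x \<in> set la"
      then obtain v where v: "v < K" "x = e (Suc v)" unfolding la_def by auto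
      then show "0 < x" using pos[of v] by simp
    qed
    have vl: "vec la = e"
    proof
      fix v show "vec la v = e v"
      proof (cases v)
        case 0 then show ?thesis using less.prems(1) by (simp add: vec_def)
      next
        case (Suc r)
        show ?thesis
        proof (cases "r < K")
          case True
          then show ?thesis using Suc nthla[of r] lenla by (simp add: vec_Suc rl_def)
        next
          case False
          then have "e (Suc r) = 0" using pos[of r] by simp
          then show ?thesis using Suc False lenla by (simp add: vec_Suc rl_def)
        qed
      qed
    qed
    show ?thesis
    proof (intro exI conjI allI impI)
      show "is_partition la" by (rule part)
      show "mdeg e = sum_list la" using mdeg_vec[OF part] vl by simp
      fix g :: "(nat\<Rightarrow>nat)\<Rightarrow>int"
      show "g e = g (vec la)" using vl by simp
    qed
  qed
qed

lemma sort_exists: assumes "e \<in> monomials"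
  shows "\<exists>la. is_partition la \<and> mdeg e = sum_list la \<and>
      (\<forall>g::(nat\<Rightarrow>nat)\<Rightarrow>int. (\<forall>e'\<in>monomials. \<forall>i\<ge>1. g (e' \<circ> tr i) = g e') \<longrightarrow> g e = g (vec la))"
proof -
  have fin: "finite {i. e i \<noteq> 0}" and e0: "e 0 = 0" using assms by (auto simp: monomials_def)
  obtain N where "\<forall>v\<in>{i. e i \<noteq> 0}. v < N" using finite_nat_bounded[OF fin] by blast
  then have "\<forall>v. N \<le> v \<longrightarrow> e v = 0" by (meson leD mem_Collect_eq)
  then show ?thesis using sort_core[of e N] e0 by blast
qed



lemma ssyt_ge_row: assumes "ssyt la T" "is_partition la" shows "c < rl la r \<Longrightarrow> Suc r \<le> T(r,c)"
proof (induction r)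
  case 0 then show ?case using ssyt_pos[OF assms(1)] by simp
next
  case (Suc r)
  have "c < rl la r" using rl_mono[OF assms(2), of r "Suc r"] Suc.prems by simp
  then show ?case using Suc.IH ssyt_col[OF assms(1,2) Suc.prems] by simp
qed

definition Ps :: "nat list \<Rightarrow> nat \<Rightarrow> nat" where "Ps xs s = (\<Sum>r<s. rl xs r)"

lemma count_le: assumes "T \<in> Kset mu e" shows "card {x\<in>cells mu. T x \<le> s} = (\<Sum>v\<le>s. e v)"
proof -
  have "{x\<in>cells mu. T x \<le> s} = (\<Union>v\<in>{..s}. {x\<in>cells mu. T x = v})" by auto
  moreover have "card (\<Union>v\<in>{..s}. {x\<in>cells mu. T x = v}) = (\<Sum>v\<le>s. card {x\<in>cells mu. T x = v})"
    by (rule card_UN_disjoint) (auto simp: finite_cells)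
  ultimately have "card {x\<in>cells mu. T x \<le> s} = (\<Sum>v\<le>s. card {x\<in>cells mu. T x = v})" by simp
  then show ?thesis using assms by (simp add: Kset_def)
qed

lemma sum_vec: "(\<Sum>v\<le>s. vec la v) = Ps la s"
  by (induction s) (auto simp: Ps_def vec_def)

lemma card_rows: "card {x\<in>cells mu. fst x < s} = Ps mu s"
proof -
  have "{x\<in>cells mu. fst x < s} = Sigma {..<s} (\<lambda>r. {..<rl mu r})" by (auto simp: cells_rl)
  then show ?thesis by (simp add: Ps_def)
qed

lemma dominance: assumes "T \<in> Kset mu (vec la)" "is_partition mu" shows "Ps la s \<le> Ps mu s"
proof -
  have T: "ssyt mu T" using assms by (simp add: Kset_def)
  have "{x\<in>cells mu. T x \<le> s} \<subseteq> {x\<in>cells mu. fst x < s}"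
  proof
    fix x assume x: "x \<in> {x\<in>cells mu. T x \<le> s}"
    obtain r c where rc: "x = (r,c)" by (cases x)
    have "c < rl mu r" using x rc by (simp add: cells_rl)
    then have "Suc r \<le> T(r,c)" by (rule ssyt_ge_row[OF T assms(2)])
    then show "x \<in> {x\<in>cells mu. fst x < s}" using x rc by simp
  qed
  then have "card {x\<in>cells mu. T x \<le> s} \<le> card {x\<in>cells mu. fst x < s}"
    by (intro card_mono) (auto simp: finite_cells)
  then show ?thesis using count_le[OF assms(1)] sum_vec card_rows by simp
qed

lemma nval_id: "(\<Sum>r<N. r * x r) + (\<Sum>s<N. \<Sum>r<Suc s. x r) = N * (\<Sum>r<N. (x r :: nat))"
  by (induction N) (auto simp: algebra_simps)

definition nval :: "nat list \<Rightarrow> nat" where "nval xs = (\<Sum>r<length xs. r * xs ! r)"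

lemma nval_rl: assumes "length xs \<le> N" shows "nval xs = (\<Sum>r<N. r * rl xs r)"
proof -
  have "(\<Sum>r<N. r * rl xs r) = (\<Sum>r<length xs. r * rl xs r)"
    using assms by (intro sum.mono_neutral_right) (auto simp: rl_def)
  then show ?thesis by (simp add: nval_def rl_def)
qed

lemma sum_rl: assumes "length xs \<le> N" shows "(\<Sum>r<N. rl xs r) = sum_list xs"
proof -
  have "(\<Sum>r<N. rl xs r) = (\<Sum>r<length xs. rl xs r)"
    using assms by (intro sum.mono_neutral_right) (auto simp: rl_def)
  then show ?thesis by (simp add: rl_def sum_list_sum_nth atLeast0LessThan)
qed

lemma rl_eq_list: assumes "is_partition xs" "is_partition ys" "\<forall>r. rl xs r = rl ys r" shows "xs = ys"
proof -
  have "length xs = length ys"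
  proof (rule ccontr)
    assume "length xs \<noteq> length ys"
    then consider "length xs < length ys" | "length ys < length xs" by linarith
    then show False
    proof cases
      case 1
      then have "0 < rl ys (length xs)" "\<not> 0 < rl xs (length xs)"
        using rl_pos[OF assms(1)] rl_pos[OF assms(2)] by auto
      then show False using assms(3) by simp
    next
      case 2
      then have "0 < rl xs (length ys)" "\<not> 0 < rl ys (length ys)"
        using rl_pos[OF assms(1)] rl_pos[OF assms(2)] by auto
      then show False using assms(3) by simp
    qed
  qed
  moreover have "\<And>r. r < length xs \<Longrightarrow> xs ! r = ys ! r"
    using assms(3) \<open>length xs = length ys\<close> unfolding rl_def by (metis)
  ultimately show ?thesis by (rule nth_equalityI)
qed

lemma triang: assumes "is_partition mu" "is_partition la" "sum_list mu = sum_list la"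
  "Kset mu (vec la) \<noteq> {}" "mu \<noteq> la" shows "nval mu < nval la"
proof -
  obtain T where T: "T \<in> Kset mu (vec la)" using assms(4) by blast
  have dom: "\<And>s. Ps la s \<le> Ps mu s" using dominance[OF T assms(1)] .
  define N where "N = length mu + length la"
  have Nm: "length mu \<le> N" and Nl: "length la \<le> N" by (auto simp: N_def)
  have "\<exists>r. rl mu r \<noteq> rl la r" using rl_eq_list[OF assms(1,2)] assms(5) by blast
  define r where "r = (LEAST r. rl mu r \<noteq> rl la r)"
  have r: "rl mu r \<noteq> rl la r" unfolding r_def using \<open>\<exists>r. rl mu r \<noteq> rl la r\<close> by (rule LeastI_ex)
  have below: "\<And>q. q < r \<Longrightarrow> rl mu q = rl la q" unfolding r_def using not_less_Least by blast
  have rN: "r < N"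
  proof (rule ccontr)
    assume "\<not> r < N"
    then have "rl mu r = 0" "rl la r = 0" using Nm Nl by (auto simp: rl_def)
    then show False using r by simp
  qed
  have "Ps mu r = Ps la r" unfolding Ps_def using below by simp
  moreover have "Ps xs (Suc r) = Ps xs r + rl xs r" for xs by (simp add: Ps_def)
  ultimately have strict: "Ps la (Suc r) < Ps mu (Suc r)" using dom[of "Suc r"] r by simp
  have Q: "(\<Sum>s<N. Ps la (Suc s)) < (\<Sum>s<N. Ps mu (Suc s))"
  proof (rule sum_strict_mono_ex1)
    show "finite {..<N}" by simp
    show "\<forall>x\<in>{..<N}. Ps la (Suc x) \<le> Ps mu (Suc x)" using dom by blast
    show "\<exists>a\<in>{..<N}. Ps la (Suc a) < Ps mu (Suc a)" using strict rN by blast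
  qed
  have "nval mu + (\<Sum>s<N. Ps mu (Suc s)) = N * sum_list mu"
    using nval_id[where N=N and x="rl mu"] nval_rl[OF Nm] sum_rl[OF Nm] by (simp add: Ps_def)
  then have "nval mu + (\<Sum>s<N. Ps mu (Suc s)) = N * sum_list la" using assms(3) by simp
  moreover have "nval la + (\<Sum>s<N. Ps la (Suc s)) = N * sum_list la"
    using nval_id[where N=N and x="rl la"] nval_rl[OF Nl] sum_rl[OF Nl] by (simp add: Ps_def)
  ultimately show ?thesis using Q by linarith
qed

lemma kostka_diag: assumes p: "is_partition la" shows "kostka la (vec la) = 1"
proof -
  define T0 where "T0 = (\<lambda>(r,c). if c < rl la r then Suc r else (0::nat))"
  have T0s: "ssyt la T0"
    unfolding ssyt_def T0_def by (auto simp: cells_rl)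
  have cnt: "card {x\<in>cells la. T0 x = v} = vec la v" for v
  proof (cases v)
    case 0
    have E: "{x\<in>cells la. T0 x = v} = {}"
    proof (rule equals0I)
      fix x assume x: "x \<in> {x\<in>cells la. T0 x = v}"
      obtain r c where rc: "x = (r,c)" by (cases x)
      then have "c < rl la r" using x by (simp add: cells_rl)
      then show False using x rc 0 by (simp add: T0_def)
    qed
    show ?thesis unfolding E using 0 by (simp add: vec_def)
  next
    case (Suc r)
    then have "{x\<in>cells la. T0 x = v} = (\<lambda>c. (r,c)) ` {..<rl la r}" by (auto simp: T0_def cells_rl)
    then show ?thesis using Suc by (simp add: card_image inj_on_def vec_def)
  qed
  have "Kset la (vec la) = {T0}"
  proof
    show "{T0} \<subseteq> Kset la (vec la)" using T0s cnt by (simp add: Kset_def)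
    show "Kset la (vec la) \<subseteq> {T0}"
    proof
      fix T assume T: "T \<in> Kset la (vec la)"
      then have Ts: "ssyt la T" by (simp add: Kset_def)
      have "T (r,c) = T0 (r,c)" for r c
      proof (cases "c < rl la r")
        case True
        have sub: "{x\<in>cells la. T x \<le> Suc r} \<subseteq> {x\<in>cells la. fst x < Suc r}"
        proof
          fix x assume x: "x \<in> {x\<in>cells la. T x \<le> Suc r}"
          obtain q d where qd: "x = (q,d)" by (cases x)
          have "d < rl la q" using x qd by (simp add: cells_rl)
          then have "Suc q \<le> T(q,d)" by (rule ssyt_ge_row[OF Ts p])
          then show "x \<in> {x\<in>cells la. fst x < Suc r}" using x qd by simp
        qed
        have "card {x\<in>cells la. T x \<le> Suc r} = card {x\<in>cells la. fst x < Suc r}"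
          using count_le[OF T] sum_vec card_rows by simp
        then have eq: "{x\<in>cells la. T x \<le> Suc r} = {x\<in>cells la. fst x < Suc r}"
          using card_subset_eq[OF _ sub] finite_cells by auto
        have "(r,c) \<in> {x\<in>cells la. fst x < Suc r}" using True by (simp add: cells_rl)
        then have "T(r,c) \<le> Suc r" using eq by blast
        moreover have "Suc r \<le> T(r,c)" using ssyt_ge_row[OF Ts p True] .
        ultimately show ?thesis using True by (simp add: T0_def)
      next
        case False
        then show ?thesis using ssyt_out[OF Ts False] by (simp add: T0_def)
      qed
      then show "T \<in> {T0}" by auto
    qed
  qed
  then show ?thesis by (simp add: kostka_Kset)
qed

function cc :: "((nat \<Rightarrow> nat) \<Rightarrow> int) \<Rightarrow> nat list \<Rightarrow> int" where
  "cc f la = f (vec la) - (\<Sum>mu\<in>{mu. is_partition mu \<and> sum_list mu = sum_list la \<and> nval mu < nval la}.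
       cc f mu * int (kostka mu (vec la)))"
  by auto
termination by (relation "measure (\<lambda>(f, la). nval la)") auto

declare cc.simps[simp del]

lemma exp_vec: assumes p: "is_partition la"
  shows "f (vec la) = (\<Sum>mu\<in>{mu. is_partition mu \<and> sum_list mu = sum_list la}. cc f mu * int (kostka mu (vec la)))"
proof -
  define P where "P = {mu. is_partition mu \<and> sum_list mu = sum_list la}"
  define Lt where "Lt = {mu. is_partition mu \<and> sum_list mu = sum_list la \<and> nval mu < nval la}"
  have finP: "finite P" unfolding P_def by (rule finite_parts)
  have sub: "insert la Lt \<subseteq> P" using p by (auto simp: P_def Lt_def)
  have "(\<Sum>mu\<in>P. cc f mu * int (kostka mu (vec la))) = (\<Sum>mu\<in>insert la Lt. cc f mu * int (kostka mu (vec la)))"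
  proof (rule sum.mono_neutral_right[OF finP sub], rule ballI)
    fix mu assume mu: "mu \<in> P - insert la Lt"
    have "kostka mu (vec la) = 0"
    proof (rule ccontr)
      assume "kostka mu (vec la) \<noteq> 0"
      then have "Kset mu (vec la) \<noteq> {}" by (auto simp: kostka_Kset)
      then have "nval mu < nval la" using triang[OF _ p] mu by (auto simp: P_def)
      then show False using mu by (auto simp: P_def Lt_def)
    qed
    then show "cc f mu * int (kostka mu (vec la)) = 0" by simp
  qed
  also have "\<dots> = cc f la + (\<Sum>mu\<in>Lt. cc f mu * int (kostka mu (vec la)))"
  proof -
    have "la \<notin> Lt" by (simp add: Lt_def)
    moreover have "finite Lt" using finite_subset[OF _ finP] sub by auto
    ultimately show ?thesis using kostka_diag[OF p] by simp
  qed
  also have "cc f la = f (vec la) - (\<Sum>mu\<in>Lt. cc f mu * int (kostka mu (vec la)))"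
    unfolding Lt_def by (rule cc.simps)
  finally show ?thesis by (simp add: P_def)
qed

theorem schur_exists: assumes inv: "\<forall>e\<in>monomials. \<forall>i\<ge>1. f (e \<circ> tr i) = f e"
  shows "schur_expansion f (cc f)"
  unfolding schur_expansion_def
proof
  fix e assume e: "e \<in> monomials"
  obtain la where la: "is_partition la" "mdeg e = sum_list la"
    "\<forall>g::(nat\<Rightarrow>nat)\<Rightarrow>int. (\<forall>e'\<in>monomials. \<forall>i\<ge>1. g (e' \<circ> tr i) = g e') \<longrightarrow> g e = g (vec la)"
    using sort_exists[OF e] by blast
  have "f e = f (vec la)" using la(3)[rule_format, of f] inv by blast
  also have "\<dots> = (\<Sum>mu\<in>{mu. is_partition mu \<and> sum_list mu = sum_list la}. cc f mu * int (kostka mu (vec la)))"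
    by (rule exp_vec[OF la(1)])
  also have "\<dots> = (\<Sum>mu\<in>{mu. is_partition mu \<and> sum_list mu = mdeg e}. cc f mu * int (kostka mu e))"
  proof (rule sum.cong)
    show "{mu. is_partition mu \<and> sum_list mu = sum_list la} = {mu. is_partition mu \<and> sum_list mu = mdeg e}"
      using la(2) by simp
  next
    fix mu assume "mu \<in> {mu. is_partition mu \<and> sum_list mu = mdeg e}"
    then have mu: "is_partition mu" by simp
    have "\<forall>e'\<in>monomials. \<forall>i\<ge>1. int (kostka mu (e' \<circ> tr i)) = int (kostka mu e')"
      using bkl.kostka_tr[of mu] mu by (simp add: bkl_def)
    then have "int (kostka mu e) = int (kostka mu (vec la))"
      using la(3)[rule_format, of "\<lambda>e. int (kostka mu e)"] by blast
    then show "cc f mu * int (kostka mu (vec la)) = cc f mu * int (kostka mu e)" by simp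
  qed
  finally show "f e = (\<Sum>mu\<in>{mu. is_partition mu \<and> sum_list mu = mdeg e}. cc f mu * int (kostka mu e))" .
qed


definition v2 :: "nat \<Rightarrow> nat \<Rightarrow> nat \<Rightarrow> nat" where
  "v2 a b = (\<lambda>v. if v = 1 then a else if v = 2 then b else 0)"

lemma v2_monomial: "v2 a b \<in> monomials"
proof -
  have "{i. v2 a b i \<noteq> 0} \<subseteq> {1,2}" by (auto simp: v2_def split: if_splits)
  then show ?thesis unfolding monomials_def by (auto intro: finite_subset simp: v2_def)
qed

lemma mdeg_v2: "mdeg (v2 a b) = a + b"
proof -
  have "mdeg (v2 a b) = (\<Sum>v<3. v2 a b v)"
    by (rule mdeg_bound) (auto simp: v2_def)
  also have "\<dots> = a + b" by (simp add: v2_def numeral_3_eq_3)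
  finally show ?thesis .
qed

lemma cells2: assumes "length mu \<le> 2"
  shows "card {x\<in>cells mu. P x} = card {c. c < rl mu 0 \<and> P (0,c)} + card {c. c < rl mu 1 \<and> P (1,c)}"
proof -
  have "card {x\<in>cells mu. P x} = (\<Sum>r<length mu. card {c. c < rl mu r \<and> P (r,c)})" by (rule cells_sum)
  also have "\<dots> = (\<Sum>r<2. card {c. c < rl mu r \<and> P (r,c)})"
    using assms by (intro sum.mono_neutral_left) (auto simp: rl_def)
  also have "\<dots> = card {c. c < rl mu 0 \<and> P (0,c)} + card {c. c < rl mu 1 \<and> P (1,c)}"
    by (simp add: numeral_2_eq_2)
  finally show ?thesis .
qed

lemma Kset_val: assumes T: "T \<in> Kset mu e" and c: "c < rl mu r" and z: "e (T(r,c)) = 0" shows False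
proof -
  have "(r,c) \<in> {x\<in>cells mu. T x = T(r,c)}" using c by (simp add: cells_rl)
  moreover have "card {x\<in>cells mu. T x = T(r,c)} = 0" using T z by (simp add: Kset_def)
  moreover have "finite {x\<in>cells mu. T x = T(r,c)}" using finite_cells by simp
  ultimately show False by auto
qed

lemma kostka_v2:
  assumes p: "is_partition mu" and s: "sum_list mu = a + b"
  shows "kostka mu (v2 a b) = (if length mu \<le> 2 \<and> rl mu 1 \<le> a \<and> rl mu 1 \<le> b then 1 else 0)"
proof -
  define m0 where "m0 = rl mu 0"
  define m1 where "m1 = rl mu 1"
  define T0 :: "nat \<times> nat \<Rightarrow> nat" where "T0 = (\<lambda>(r,c). if r = 0 \<and> c < m0 then (if c < a then 1 else 2)
                         else if r = 1 \<and> c < m1 then 2 else (0::nat))"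
  have uniq: "T = T0 \<and> length mu \<le> 2 \<and> m1 \<le> a \<and> m1 \<le> b" if T: "T \<in> Kset mu (v2 a b)" for T
  proof -
    have Ts: "ssyt mu T" using T by (simp add: Kset_def)
    have le2: "T(r,c) \<le> 2" if "c < rl mu r" for r c
    proof (rule ccontr)
      assume "\<not> T(r,c) \<le> 2"
      then have "v2 a b (T(r,c)) = 0" by (simp add: v2_def)
      then show False using Kset_val[OF T that] by simp
    qed
    have len: "length mu \<le> 2"
    proof (rule ccontr)
      assume "\<not> length mu \<le> 2"
      then have "0 < rl mu 2" using rl_pos[OF p] by simp
      then have "3 \<le> T(2,0)" using ssyt_ge_row[OF Ts p, of 0 2] by simp
      then show False using le2[of 0 2] \<open>0 < rl mu 2\<close> by simp
    qed
    have row1: "T(1,c) = 2" if "c < m1" for c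
      using ssyt_ge_row[OF Ts p, of c 1] le2[of c 1] that by (simp add: m1_def)
    define M where "M = card {c. c < rl mu 0 \<and> T(0,c) \<le> 1}"
    have rowiff: "T(0,c) \<le> 1 \<longleftrightarrow> c < M" if "c < m0" for c
      unfolding M_def by (rule row_iff[OF Ts]) (use that m0_def in auto)
    have Mle: "M \<le> m0" unfolding M_def m0_def by (rule card_row_le)
    have cnt1: "card {x\<in>cells mu. T x = 1} = a" using T by (simp add: Kset_def v2_def)
    have "card {x\<in>cells mu. T x = 1} = card {c. c < m0 \<and> T(0,c) = 1} + card {c. c < m1 \<and> T(1,c) = 1}"
      unfolding m0_def m1_def by (rule cells2[OF len])
    also have "{c. c < m1 \<and> T(1,c) = 1} = {}" using row1 by auto
    also have "{c. c < m0 \<and> T(0,c) = 1} = {..<M}"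
    proof -
      have "T(0,c) = 1 \<longleftrightarrow> T(0,c) \<le> 1" if "c < m0" for c
        using ssyt_pos[OF Ts, of c 0] that by (auto simp: m0_def)
      then show ?thesis using rowiff Mle by auto
    qed
    finally have Ma: "M = a" using cnt1 by simp
    have m1a: "m1 \<le> a"
    proof (rule ccontr)
      assume "\<not> m1 \<le> a"
      then have "a < m1" by simp
      moreover have "m1 \<le> m0" unfolding m0_def m1_def by (rule rl_mono[OF p]) simp
      ultimately have "a < m0" by simp
      have "T(0,a) < T(1,a)" using ssyt_col[OF Ts p, of a 0] \<open>a < m1\<close> by (simp add: m1_def)
      then have "T(0,a) \<le> 1" using row1[OF \<open>a < m1\<close>] by simp
      then show False using rowiff[OF \<open>a < m0\<close>] Ma by simp
    qed
    have sm: "m0 + m1 = a + b"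
    proof -
      have "(\<Sum>r<2. rl mu r) = sum_list mu" by (rule sum_rl[OF len])
      then show ?thesis using s by (simp add: m0_def m1_def numeral_2_eq_2)
    qed
    have m1b: "m1 \<le> b" using Mle Ma sm by simp
    have "T (r,c) = T0 (r,c)" for r c
    proof (cases "c < rl mu r")
      case True
      consider "r = 0" | "r = 1" | "2 \<le> r" by linarith
      then show ?thesis
      proof cases
        case 1
        have "T(0,c) \<ge> 1" "T(0,c) \<le> 2" using ssyt_pos[OF Ts, of c 0] le2[of c 0] True 1 by auto
        then show ?thesis using rowiff[of c] True 1 Ma by (auto simp: T0_def m0_def)
      next
        case 2
        then show ?thesis using row1[of c] True by (simp add: T0_def m1_def)
      next
        case 3
        then have "0 < rl mu r" using True by simp
        then have "r < length mu" using rl_pos[OF p] by simp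
        then show ?thesis using 3 len by simp
      qed
    next
      case False
      then show ?thesis using ssyt_out[OF Ts False] by (auto simp: T0_def m0_def m1_def)
    qed
    then have "T = T0" by auto
    then show ?thesis using len m1a m1b by simp
  qed
  show ?thesis
  proof (cases "length mu \<le> 2 \<and> m1 \<le> a \<and> m1 \<le> b")
    case False
    have "Kset mu (v2 a b) = {}"
    proof (rule equals0I)
      fix T assume "T \<in> Kset mu (v2 a b)"
      then have "length mu \<le> 2 \<and> m1 \<le> a \<and> m1 \<le> b" using uniq by simp
      then show False using False by simp
    qed
    then show ?thesis using False by (simp add: kostka_Kset m1_def)
  next
    case True
    then have len: "length mu \<le> 2" and m1a: "m1 \<le> a" and m1b: "m1 \<le> b" by auto
    have sm: "m0 + m1 = a + b"
    proof -
      have "(\<Sum>r<2. rl mu r) = sum_list mu" by (rule sum_rl[OF len])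
      then show ?thesis using s by (simp add: m0_def m1_def numeral_2_eq_2)
    qed
    have am0: "a \<le> m0" using sm m1b by simp
    have cells_iff: "(r,c) \<in> cells mu \<longleftrightarrow> (r = 0 \<and> c < m0) \<or> (r = 1 \<and> c < m1)" for r c
    proof (cases "2 \<le> r")
      case True
      then have "rl mu r = 0" using len by (simp add: rl_def)
      then show ?thesis using True by (simp add: cells_rl)
    next
      case False
      then have "r = 0 \<or> r = 1" by linarith
      then show ?thesis by (auto simp: cells_rl m0_def m1_def)
    qed
    have T0s: "ssyt mu T0"
      unfolding ssyt_def
    proof (intro conjI allI impI ballI)
      fix x assume "x \<in> cells mu" then show "1 \<le> T0 x" using cells_iff by (cases x) (auto simp: T0_def)
    next
      fix x assume "x \<notin> cells mu" then show "T0 x = 0" using cells_iff by (cases x) (auto simp: T0_def)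
    next
      fix r c assume "(r, c) \<in> cells mu \<and> (r, Suc c) \<in> cells mu"
      then show "T0 (r, c) \<le> T0 (r, Suc c)" using cells_iff by (auto simp: T0_def)
    next
      fix r c assume "(r, c) \<in> cells mu \<and> (Suc r, c) \<in> cells mu"
      then have "r = 0" "c < m1" using cells_iff by auto
      then show "T0 (r, c) < T0 (Suc r, c)" using m1a by (auto simp: T0_def)
    qed
    have cnt: "card {x\<in>cells mu. T0 x = v} = v2 a b v" for v
    proof -
      have "card {x\<in>cells mu. T0 x = v} = card {c. c < m0 \<and> T0(0,c) = v} + card {c. c < m1 \<and> T0(1,c) = v}"
        unfolding m0_def m1_def by (rule cells2[OF len])
      moreover have "{c. c < m0 \<and> T0(0,c) = v} = (if v = 1 then {..<a} else if v = 2 then {a..<m0} else {})"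
        using am0 by (auto simp: T0_def)
      moreover have "{c. c < m1 \<and> T0(1,c) = v} = (if v = 2 then {..<m1} else {})"
        by (auto simp: T0_def)
      ultimately show ?thesis using sm am0 by (simp add: v2_def)
    qed
    have "Kset mu (v2 a b) = {T0}"
    proof
      show "Kset mu (v2 a b) \<subseteq> {T0}"
      proof
        fix T assume "T \<in> Kset mu (v2 a b)"
        then have "T = T0" using uniq by simp
        then show "T \<in> {T0}" by simp
      qed
      show "{T0} \<subseteq> Kset mu (v2 a b)" using T0s cnt by (simp add: Kset_def)
    qed
    then show ?thesis using True by (simp add: kostka_Kset m1_def)
  qed
qed

lemma cc_two:
  assumes inv: "\<forall>e\<in>monomials. \<forall>i\<ge>1. f (e \<circ> tr i) = f e" and b: "1 \<le> b" and ab: "b \<le> a"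
  shows "cc f [a,b] = f (v2 a b) - f (v2 (Suc a) (b - 1))"
proof -
  have ex: "schur_expansion f (cc f)" by (rule schur_exists[OF inv])
  define P where "P = {mu. is_partition mu \<and> sum_list mu = a + b}"
  have finP: "finite P" unfolding P_def by (rule finite_parts)
  have e1: "f (v2 a b) = (\<Sum>mu\<in>P. cc f mu * int (kostka mu (v2 a b)))"
    using ex[unfolded schur_expansion_def, rule_format, OF v2_monomial[of a b]] unfolding mdeg_v2 P_def .
  have "f (v2 (Suc a) (b - 1)) = (\<Sum>mu\<in>{mu. is_partition mu \<and> sum_list mu = Suc a + (b - 1)}. cc f mu * int (kostka mu (v2 (Suc a) (b - 1))))"
    using ex[unfolded schur_expansion_def, rule_format, OF v2_monomial[of "Suc a" "b - 1"]] unfolding mdeg_v2 .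
  then have e2: "f (v2 (Suc a) (b - 1)) = (\<Sum>mu\<in>P. cc f mu * int (kostka mu (v2 (Suc a) (b - 1))))"
    using b unfolding P_def by simp
  have ab_in: "[a,b] \<in> P" using b ab by (simp add: P_def is_partition_def)
  have "f (v2 a b) - f (v2 (Suc a) (b - 1)) =
        (\<Sum>mu\<in>P. cc f mu * (int (kostka mu (v2 a b)) - int (kostka mu (v2 (Suc a) (b - 1)))))"
    unfolding e1 e2 by (simp add: sum_subtractf algebra_simps)
  also have "\<dots> = (\<Sum>mu\<in>P. if mu = [a,b] then cc f mu else 0)"
  proof (rule sum.cong[OF refl])
    fix mu assume "mu \<in> P"
    then have p: "is_partition mu" and s: "sum_list mu = a + b" by (auto simp: P_def)
    have s': "sum_list mu = Suc a + (b - 1)" using s b by simp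
    have len2: "rl mu 0 + rl mu 1 = a + b" if "length mu \<le> 2"
    proof -
      have "(\<Sum>r<2. rl mu r) = sum_list mu" by (rule sum_rl[OF that])
      then show ?thesis using s by (simp add: numeral_2_eq_2)
    qed
    have "int (kostka mu (v2 a b)) - int (kostka mu (v2 (Suc a) (b - 1))) = (if mu = [a,b] then 1 else 0)"
    proof (cases "mu = [a,b]")
      case True
      then show ?thesis using kostka_v2[OF p s] kostka_v2[OF p s'] ab b by (simp add: rl_def)
    next
      case False
      have "\<not> (length mu \<le> 2 \<and> rl mu 1 = b)"
      proof
        assume h: "length mu \<le> 2 \<and> rl mu 1 = b"
        then have "1 < length mu" using rl_pos[OF p, of 1] b by simp
        then have l2: "length mu = 2" using h by simp
        have "rl mu 0 = a" using len2 h by simp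
        obtain x y where xy: "mu = [x,y]" using l2 by (metis length_0_conv length_Suc_conv numeral_2_eq_2)
        then have "mu = [a,b]" using h \<open>rl mu 0 = a\<close> by (simp add: rl_def)
        then show False using False by simp
      qed
      then show ?thesis using kostka_v2[OF p s] kostka_v2[OF p s'] ab b False by auto
    qed
    then show "cc f mu * (int (kostka mu (v2 a b)) - int (kostka mu (v2 (Suc a) (b - 1)))) =
          (if mu = [a,b] then cc f mu else 0)" by simp
  qed
  also have "\<dots> = cc f [a,b]" using ab_in finP by (simp add: sum.delta')
  finally show ?thesis by simp
qed

lemma cc_nval0: assumes "nval la = 0" shows "cc f la = f (vec la)"
  using cc.simps[of f la] assms by simp

lemma vec_v2: "vec [a,b] = v2 a b"
  by (auto simp: fun_eq_iff vec_def v2_def rl_def nth_Cons split: nat.splits)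


definition opts :: "nat \<Rightarrow> nat set \<Rightarrow> nat set set" where
  "opts m G = {S. S \<subseteq> {1,2} \<and> card S = m \<and> S \<inter> G = {}}"

definition C2 :: "'v set \<Rightarrow> ('v \<Rightarrow> 'v \<Rightarrow> bool) \<Rightarrow> ('v \<Rightarrow> nat) \<Rightarrow> ('v \<Rightarrow> nat set) \<Rightarrow> ('v \<Rightarrow> nat set) set" where
  "C2 V E \<alpha> F = {\<kappa>. (\<forall>v\<in>V. \<kappa> v \<in> opts (\<alpha> v) (F v)) \<and> (\<forall>v. v \<notin> V \<longrightarrow> \<kappa> v = {}) \<and>
      (\<forall>u\<in>V. \<forall>v\<in>V. E u v \<longrightarrow> \<kappa> u \<inter> \<kappa> v = {})}"

definition c1 :: "'v set \<Rightarrow> ('v \<Rightarrow> nat set) \<Rightarrow> nat" where "c1 V \<kappa> = card {v\<in>V. 1 \<in> \<kappa> v}"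

definition QQ :: "'v set \<Rightarrow> ('v \<Rightarrow> 'v \<Rightarrow> bool) \<Rightarrow> ('v \<Rightarrow> nat) \<Rightarrow> ('v \<Rightarrow> nat set) \<Rightarrow> int poly" where
  "QQ V E \<alpha> F = (\<Sum>\<kappa>\<in>C2 V E \<alpha> F. monom 1 (c1 V \<kappa>))"

lemma finite_opts: "finite (opts m G)"
proof -
  have "opts m G \<subseteq> Pow {1,2}" by (auto simp: opts_def)
  then show ?thesis by (rule finite_subset) simp
qed

lemma opts_mono: "opts m (G \<union> H) \<subseteq> opts m G" by (auto simp: opts_def)

lemma finite_C2: assumes "finite V" shows "finite (C2 V E \<alpha> F)"
proof -
  have "C2 V E \<alpha> F \<subseteq> (\<lambda>f v. if v \<in> V then f v else {}) ` PiE V (\<lambda>_. Pow {1,2})"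
  proof
    fix \<kappa> assume k: "\<kappa> \<in> C2 V E \<alpha> F"
    have "restrict \<kappa> V \<in> PiE V (\<lambda>_. Pow {1,2})" using k by (auto simp: C2_def opts_def)
    moreover have "\<kappa> = (\<lambda>v. if v \<in> V then restrict \<kappa> V v else {})" using k by (auto simp: C2_def fun_eq_iff)
    ultimately show "\<kappa> \<in> (\<lambda>f v. if v \<in> V then f v else {}) ` PiE V (\<lambda>_. Pow {1,2})" by blast
  qed
  moreover have "finite (PiE V (\<lambda>_. Pow {1::nat,2}))" using assms by (simp add: finite_PiE)
  ultimately show ?thesis using finite_subset by blast
qed

lemma C2_empty: "C2 {} E \<alpha> F = {\<lambda>_. {}}" by (auto simp: C2_def)

lemma QQ_empty: "QQ {} E \<alpha> F = 1" by (simp add: QQ_def C2_empty c1_def)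

lemma QQ_union:
  assumes fV: "finite V" and fW: "finite W" and VW: "V \<inter> W = {}"
    and noE: "\<And>u w. u \<in> V \<Longrightarrow> w \<in> W \<Longrightarrow> \<not> E u w \<and> \<not> E w u"
  shows "QQ (V \<union> W) E \<alpha> F = QQ V E \<alpha> F * QQ W E \<alpha> F"
proof -
  define i where "i = (\<lambda>(k1::'a \<Rightarrow> nat set, k2::'a \<Rightarrow> nat set). \<lambda>v. if v \<in> V then k1 v else k2 v)"
  define j where "j = (\<lambda>k::'a \<Rightarrow> nat set. (\<lambda>v. if v \<in> V then k v else {}, \<lambda>v. if v \<in> W then k v else {}))"
  have "QQ (V \<union> W) E \<alpha> F = (\<Sum>p\<in>C2 V E \<alpha> F \<times> C2 W E \<alpha> F. monom 1 (c1 V (fst p)) * monom 1 (c1 W (snd p)))"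
    unfolding QQ_def
  proof (rule sum.reindex_bij_witness[where i=i and j=j])
    fix k assume k: "k \<in> C2 (V \<union> W) E \<alpha> F"
    show "i (j k) = k" using k VW by (auto simp: i_def j_def C2_def fun_eq_iff)
    show "j k \<in> C2 V E \<alpha> F \<times> C2 W E \<alpha> F" using k by (auto simp: j_def C2_def)
    have "c1 (V \<union> W) k = c1 V (fst (j k)) + c1 W (snd (j k))"
    proof -
      have "{v\<in>V \<union> W. 1 \<in> k v} = {v\<in>V. 1 \<in> k v} \<union> {v\<in>W. 1 \<in> k v}" by auto
      moreover have "card ({v\<in>V. 1 \<in> k v} \<union> {v\<in>W. 1 \<in> k v}) = card {v\<in>V. 1 \<in> k v} + card {v\<in>W. 1 \<in> k v}"
        by (rule card_Un_disjoint) (use fV fW VW in auto)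
      moreover have "c1 V (fst (j k)) = card {v\<in>V. 1 \<in> k v}" unfolding c1_def j_def
        by (auto intro: arg_cong[where f=card])
      moreover have "c1 W (snd (j k)) = card {v\<in>W. 1 \<in> k v}" unfolding c1_def j_def
        by (auto intro: arg_cong[where f=card])
      ultimately show ?thesis unfolding c1_def by simp
    qed
    then show "monom (1::int) (c1 V (fst (j k))) * monom 1 (c1 W (snd (j k))) = monom 1 (c1 (V \<union> W) k)"
      by (simp add: mult_monom)
  next
    fix p assume p: "p \<in> C2 V E \<alpha> F \<times> C2 W E \<alpha> F"
    obtain k1 k2 where p12: "p = (k1,k2)" by (cases p)
    have k1: "k1 \<in> C2 V E \<alpha> F" and k2: "k2 \<in> C2 W E \<alpha> F" using p p12 by auto
    show "j (i p) = p" using k1 k2 VW p12 by (auto simp: i_def j_def C2_def fun_eq_iff)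
    show "i p \<in> C2 (V \<union> W) E \<alpha> F"
      unfolding C2_def
    proof (intro CollectI conjI ballI allI impI)
      fix v assume "v \<in> V \<union> W" then show "i p v \<in> opts (\<alpha> v) (F v)"
        using k1 k2 VW p12 by (auto simp: i_def C2_def)
    next
      fix v assume "v \<notin> V \<union> W" then show "i p v = {}" using k1 k2 p12 by (auto simp: i_def C2_def)
    next
      fix u v assume u: "u \<in> V \<union> W" and v: "v \<in> V \<union> W" and e: "E u v"
      show "i p u \<inter> i p v = {}"
      proof (cases "u \<in> V")
        case True
        then have "v \<in> V" using noE[of u v] e v by auto
        then show ?thesis using True k1 e p12 by (auto simp: i_def C2_def)
      next
        case False
        then have "u \<in> W" using u by simp
        then have "v \<notin> V" using noE[of v u] e by auto
        then have "v \<in> W" using v by simp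
        then show ?thesis using False \<open>u \<in> W\<close> \<open>v \<notin> V\<close> k2 e p12 by (auto simp: i_def C2_def)
      qed
    qed
  qed
  also have "\<dots> = QQ V E \<alpha> F * QQ W E \<alpha> F"
    unfolding QQ_def sum_product sum.cartesian_product by (simp add: case_prod_unfold)
  finally show ?thesis .
qed

lemma QQ_elim:
  assumes fV: "finite V" and x: "x \<in> V" and nx: "\<not> E x x"
  shows "QQ V E \<alpha> F = (\<Sum>S\<in>opts (\<alpha> x) (F x). monom 1 (if 1 \<in> S then 1 else 0) *
            QQ (V - {x}) E \<alpha> (\<lambda>v. F v \<union> (if E x v \<or> E v x then S else {})))"
proof -
  have "QQ V E \<alpha> F = (\<Sum>S\<in>opts (\<alpha> x) (F x). \<Sum>k\<in>{k. k \<in> C2 V E \<alpha> F \<and> k x = S}. monom 1 (c1 V k))"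
    unfolding QQ_def
    by (rule sum.group[symmetric]) (use fV x finite_C2 finite_opts in \<open>auto simp: C2_def\<close>)
  also have "\<dots> = (\<Sum>S\<in>opts (\<alpha> x) (F x). monom 1 (if 1 \<in> S then 1 else 0) *
            QQ (V - {x}) E \<alpha> (\<lambda>v. F v \<union> (if E x v \<or> E v x then S else {})))"
  proof (rule sum.cong[OF refl])
    fix S assume S: "S \<in> opts (\<alpha> x) (F x)"
    define FS where "FS = (\<lambda>v. F v \<union> (if E x v \<or> E v x then S else {}))"
    have "(\<Sum>k\<in>{k. k \<in> C2 V E \<alpha> F \<and> k x = S}. monom (1::int) (c1 V k)) =
          (\<Sum>k\<in>C2 (V - {x}) E \<alpha> FS. monom 1 (if 1 \<in> S then 1 else 0) * monom 1 (c1 (V - {x}) k))"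
    proof (rule sum.reindex_bij_witness[where i="\<lambda>k. k(x := S)" and j="\<lambda>k. k(x := {})"])
      fix k assume k: "k \<in> {k. k \<in> C2 V E \<alpha> F \<and> k x = S}"
      show "(k(x := {}))(x := S) = k" using k by auto
      show "k(x := {}) \<in> C2 (V - {x}) E \<alpha> FS"
        unfolding C2_def
      proof (intro CollectI conjI ballI allI impI)
        fix v assume v: "v \<in> V - {x}"
        have "k v \<in> opts (\<alpha> v) (F v)" using k v by (auto simp: C2_def)
        moreover have "E x v \<or> E v x \<Longrightarrow> k v \<inter> S = {}"
        proof -
          assume e: "E x v \<or> E v x"
          have edge: "\<And>u w. u \<in> V \<Longrightarrow> w \<in> V \<Longrightarrow> E u w \<Longrightarrow> k u \<inter> k w = {}"
            using k by (auto simp: C2_def)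
          have kx: "k x = S" using k by simp
          show "k v \<inter> S = {}" using edge[of x v] edge[of v x] v x kx e by auto
        qed
        ultimately show "(k(x := {})) v \<in> opts (\<alpha> v) (FS v)" using v by (auto simp: opts_def FS_def)
      next
        fix v assume "v \<notin> V - {x}" then show "(k(x := {})) v = {}" using k by (auto simp: C2_def)
      next
        fix u v assume "u \<in> V - {x}" "v \<in> V - {x}" "E u v"
        then show "(k(x := {})) u \<inter> (k(x := {})) v = {}" using k by (auto simp: C2_def)
      qed
      have "c1 V k = (if 1 \<in> S then 1 else 0) + c1 (V - {x}) (k(x := {}))"
      proof -
        have "{v\<in>V. 1 \<in> k v} = (if 1 \<in> S then {x} else {}) \<union> {v\<in>V - {x}. 1 \<in> (k(x := {})) v}"
          using k x by auto
        moreover have "finite {v\<in>V - {x}. 1 \<in> (k(x := {})) v}" using fV by simp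
        ultimately show ?thesis unfolding c1_def by (simp add: card_insert_if)
      qed
      then show "monom (1::int) (if 1 \<in> S then 1 else 0) * monom 1 (c1 (V - {x}) (k(x := {}))) = monom 1 (c1 V k)"
        by (simp add: mult_monom)
    next
      fix k assume k: "k \<in> C2 (V - {x}) E \<alpha> FS"
      show "(k(x := S))(x := {}) = k" using k by (auto simp: C2_def fun_eq_iff)
      show "k(x := S) \<in> {k. k \<in> C2 V E \<alpha> F \<and> k x = S}"
        unfolding C2_def
      proof (intro CollectI conjI ballI allI impI)
        fix v assume v: "v \<in> V"
        show "(k(x := S)) v \<in> opts (\<alpha> v) (F v)"
        proof (cases "v = x")
          case True then show ?thesis using S by simp
        next
          case False
          then have "k v \<in> opts (\<alpha> v) (FS v)" using k v by (auto simp: C2_def)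
          then show ?thesis using False opts_mono unfolding FS_def by auto
        qed
      next
        fix v assume "v \<notin> V" then show "(k(x := S)) v = {}" using k x by (auto simp: C2_def)
      next
        fix u v assume u: "u \<in> V" and v: "v \<in> V" and e: "E u v"
        show "(k(x := S)) u \<inter> (k(x := S)) v = {}"
        proof (cases "u = x")
          case True
          then have "v \<noteq> x" using nx e by auto
          then have "k v \<in> opts (\<alpha> v) (FS v)" using k v by (auto simp: C2_def)
          then have "k v \<inter> S = {}" using True e by (auto simp: opts_def FS_def)
          then show ?thesis using True \<open>v \<noteq> x\<close> by auto
        next
          case False
          show ?thesis
          proof (cases "v = x")
            case True
            then have "k u \<in> opts (\<alpha> u) (FS u)" using k u False by (auto simp: C2_def)
            then have "k u \<inter> S = {}" using True e by (auto simp: opts_def FS_def)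
            then show ?thesis using True False by auto
          next
            case False2: False
            then show ?thesis using False u v e k by (auto simp: C2_def)
          qed
        qed
      next
        show "(k(x := S)) x = S" by simp
      qed
    qed
    also have "\<dots> = monom 1 (if 1 \<in> S then 1 else 0) * QQ (V - {x}) E \<alpha> FS"
      by (simp add: QQ_def sum_distrib_left)
    finally show "(\<Sum>k\<in>{k. k \<in> C2 V E \<alpha> F \<and> k x = S}. monom 1 (c1 V k)) =
       monom 1 (if 1 \<in> S then 1 else 0) * QQ (V - {x}) E \<alpha> (\<lambda>v. F v \<union> (if E x v \<or> E v x then S else {}))"
      unfolding FS_def .
  qed
  finally show ?thesis .
qed


definition Xset :: "'v set \<Rightarrow> ('v \<Rightarrow> 'v \<Rightarrow> bool) \<Rightarrow> ('v \<Rightarrow> nat) \<Rightarrow> (nat \<Rightarrow> nat) \<Rightarrow> ('v \<Rightarrow> nat set) set" where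
  "Xset V E \<alpha> e = {\<kappa> \<in> colourings V E \<alpha>. \<forall>i. card {v\<in>V. i \<in> \<kappa> v} = e i}"

lemma Xcoef_Xset: "Xcoef V E \<alpha> e = int (card (Xset V E \<alpha> e))" by (simp add: Xcoef_def Xset_def)

lemma tr_mem: "j \<in> tr i ` A \<longleftrightarrow> tr i j \<in> A"
proof
  assume "j \<in> tr i ` A" then obtain a where "a \<in> A" "j = tr i a" by blast
  then show "tr i j \<in> A" by simp
next
  assume "tr i j \<in> A" then have "tr i (tr i j) \<in> tr i ` A" by (rule imageI)
  then show "j \<in> tr i ` A" by simp
qed

lemma tr_inj: "inj (tr i)"
proof (rule injI)
  fix a b assume "tr i a = tr i b"
  then have "tr i (tr i a) = tr i (tr i b)" by simp
  then show "a = b" by simp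
qed

lemma tr0: "1 \<le> i \<Longrightarrow> tr i 0 = 0" by (simp add: tr_def)

lemma Xset_tr: assumes i: "1 \<le> i" and k: "\<kappa> \<in> Xset V E \<alpha> e"
  shows "(\<lambda>v. tr i ` \<kappa> v) \<in> Xset V E \<alpha> (e \<circ> tr i)"
proof -
  have kc: "\<kappa> \<in> colourings V E \<alpha>" and cnt: "\<And>j. card {v\<in>V. j \<in> \<kappa> v} = e j" using k by (auto simp: Xset_def)
  have "(\<lambda>v. tr i ` \<kappa> v) \<in> colourings V E \<alpha>"
    unfolding colourings_def
  proof (intro CollectI conjI ballI allI impI)
    fix v assume v: "v \<in> V"
    show "finite (tr i ` \<kappa> v)" using kc v by (simp add: colourings_def)
    show "0 \<notin> tr i ` \<kappa> v" using kc v tr0[OF i] by (simp add: colourings_def tr_mem)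
    show "card (tr i ` \<kappa> v) = \<alpha> v" using kc v card_image[OF inj_on_subset[OF tr_inj]] by (simp add: colourings_def)
  next
    fix v assume "v \<notin> V" then show "tr i ` \<kappa> v = {}" using kc by (simp add: colourings_def)
  next
    fix u v assume "u \<in> V" "v \<in> V" "E u v"
    then have "\<kappa> u \<inter> \<kappa> v = {}" using kc by (simp add: colourings_def)
    then show "tr i ` \<kappa> u \<inter> tr i ` \<kappa> v = {}" using image_Int[OF tr_inj, of i "\<kappa> u" "\<kappa> v"] by simp
  qed
  moreover have "card {v\<in>V. j \<in> tr i ` \<kappa> v} = (e \<circ> tr i) j" for j
    using cnt[of "tr i j"] by (simp add: tr_mem)
  ultimately show ?thesis by (simp add: Xset_def)
qed

lemma Xcoef_tr: assumes i: "1 \<le> i" shows "Xcoef V E \<alpha> (e \<circ> tr i) = Xcoef V E \<alpha> e"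
proof -
  define \<phi> where "\<phi> = (\<lambda>\<kappa> v. tr i ` \<kappa> (v::'a))"
  have inv: "\<phi> (\<phi> \<kappa>) = \<kappa>" for \<kappa> unfolding \<phi>_def by (auto simp: fun_eq_iff image_image)
  have inj: "inj_on \<phi> (Xset V E \<alpha> e)" by (rule inj_on_inverseI[where g=\<phi>]) (rule inv)
  have "\<phi> ` Xset V E \<alpha> e = Xset V E \<alpha> (e \<circ> tr i)"
  proof
    show "\<phi> ` Xset V E \<alpha> e \<subseteq> Xset V E \<alpha> (e \<circ> tr i)" using Xset_tr[OF i] by (auto simp: \<phi>_def)
    show "Xset V E \<alpha> (e \<circ> tr i) \<subseteq> \<phi> ` Xset V E \<alpha> e"
    proof
      fix \<kappa> assume "\<kappa> \<in> Xset V E \<alpha> (e \<circ> tr i)"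
      then have "\<phi> \<kappa> \<in> Xset V E \<alpha> (e \<circ> tr i \<circ> tr i)" using Xset_tr[OF i] by (simp add: \<phi>_def)
      moreover have "e \<circ> tr i \<circ> tr i = e" by (auto simp: fun_eq_iff)
      ultimately have h1: "\<phi> \<kappa> \<in> Xset V E \<alpha> e" by simp
      have h2: "\<kappa> = \<phi> (\<phi> \<kappa>)" using inv by simp
      show "\<kappa> \<in> \<phi> ` Xset V E \<alpha> e" by (rule image_eqI[where f=\<phi> and x="\<phi> \<kappa>", OF h2 h1])
    qed
  qed
  then show ?thesis unfolding Xcoef_Xset using card_image[OF inj] by simp
qed

definition c2 :: "'v set \<Rightarrow> ('v \<Rightarrow> nat set) \<Rightarrow> nat" where "c2 V \<kappa> = card {v\<in>V. 2 \<in> \<kappa> v}"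

lemma card_sub12: "A \<subseteq> {1,2::nat} \<Longrightarrow> card A = (if 1 \<in> A then 1 else 0) + (if 2 \<in> A then 1 else 0)"
proof -
  assume a: "A \<subseteq> {1,2}"
  then have eq: "A = (if 1 \<in> A then {1} else {}) \<union> (if 2 \<in> A then {2} else {})" by auto
  show ?thesis by (subst eq) auto
qed

lemma card_filter_sum: "finite V \<Longrightarrow> card {v\<in>V. P v} = (\<Sum>v\<in>V. if P v then 1 else 0)"
  by (simp add: sum.If_cases Int_def conj_commute)

lemma c12_sum: assumes fV: "finite V" and k: "\<kappa> \<in> C2 V E \<alpha> F"
  shows "c1 V \<kappa> + c2 V \<kappa> = (\<Sum>v\<in>V. \<alpha> v)"
proof -
  have "(\<Sum>v\<in>V. \<alpha> v) = (\<Sum>v\<in>V. (if 1 \<in> \<kappa> v then 1 else 0) + (if 2 \<in> \<kappa> v then 1 else 0))"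
  proof (rule sum.cong[OF refl])
    fix v assume "v \<in> V"
    then have "\<kappa> v \<in> opts (\<alpha> v) (F v)" using k by (simp add: C2_def)
    then show "\<alpha> v = (if 1 \<in> \<kappa> v then 1 else 0) + (if 2 \<in> \<kappa> v then 1 else 0)"
      using card_sub12[of "\<kappa> v"] by (auto simp: opts_def)
  qed
  also have "\<dots> = c1 V \<kappa> + c2 V \<kappa>" unfolding c1_def c2_def using fV by (simp add: card_filter_sum sum.distrib)
  finally show ?thesis by simp
qed

lemma Xset_v2: assumes fV: "finite V"
  shows "Xset V E \<alpha> (v2 x y) = {\<kappa>\<in>C2 V E \<alpha> (\<lambda>_. {}). c1 V \<kappa> = x \<and> c2 V \<kappa> = y}"
proof (intro set_eqI iffI)
  fix \<kappa> assume k: "\<kappa> \<in> Xset V E \<alpha> (v2 x y)"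
  have kc: "\<kappa> \<in> colourings V E \<alpha>" and cnt: "\<And>j. card {v\<in>V. j \<in> \<kappa> v} = v2 x y j" using k by (auto simp: Xset_def)
  have sub: "\<kappa> v \<subseteq> {1,2}" if v: "v \<in> V" for v
  proof
    fix j assume j: "j \<in> \<kappa> v"
    show "j \<in> {1,2}"
    proof (rule ccontr)
      assume "j \<notin> {1,2}"
      then have "card {v\<in>V. j \<in> \<kappa> v} = 0" using cnt[of j] by (simp add: v2_def)
      moreover have "finite {v\<in>V. j \<in> \<kappa> v}" using fV by simp
      ultimately show False using v j by auto
    qed
  qed
  have "\<kappa> \<in> C2 V E \<alpha> (\<lambda>_. {})"
    unfolding C2_def opts_def using kc sub by (auto simp: colourings_def)
  moreover have "c1 V \<kappa> = x" "c2 V \<kappa> = y" using cnt[of 1] cnt[of 2] by (auto simp: c1_def c2_def v2_def)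
  ultimately show "\<kappa> \<in> {\<kappa>\<in>C2 V E \<alpha> (\<lambda>_. {}). c1 V \<kappa> = x \<and> c2 V \<kappa> = y}" by simp
next
  fix \<kappa> assume k: "\<kappa> \<in> {\<kappa>\<in>C2 V E \<alpha> (\<lambda>_. {}). c1 V \<kappa> = x \<and> c2 V \<kappa> = y}"
  then have kc: "\<kappa> \<in> C2 V E \<alpha> (\<lambda>_. {})" and c: "c1 V \<kappa> = x" "c2 V \<kappa> = y" by auto
  have sub: "\<kappa> v \<subseteq> {1,2}" if "v \<in> V" for v using kc that by (auto simp: C2_def opts_def)
  have "\<kappa> \<in> colourings V E \<alpha>"
    unfolding colourings_def
  proof (intro CollectI conjI ballI allI impI)
    fix v assume v: "v \<in> V"
    show "finite (\<kappa> v)" using sub[OF v] finite_subset by blast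
    show "0 \<notin> \<kappa> v" using sub[OF v] by auto
    show "card (\<kappa> v) = \<alpha> v" using kc v by (simp add: C2_def opts_def)
  next
    fix v assume "v \<notin> V" then show "\<kappa> v = {}" using kc by (simp add: C2_def)
  next
    fix u v assume "u \<in> V" "v \<in> V" "E u v" then show "\<kappa> u \<inter> \<kappa> v = {}" using kc by (simp add: C2_def)
  qed
  moreover have "card {v\<in>V. j \<in> \<kappa> v} = v2 x y j" for j
  proof -
    consider "j = 1" | "j = 2" | "j \<noteq> 1 \<and> j \<noteq> 2" by auto
    then show ?thesis
    proof cases
      case 3
      then have E0: "{v\<in>V. j \<in> \<kappa> v} = {}" using sub by auto
      show ?thesis unfolding E0 using 3 by (simp add: v2_def)
    qed (use c in \<open>auto simp: c1_def c2_def v2_def\<close>)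
  qed
  ultimately show "\<kappa> \<in> Xset V E \<alpha> (v2 x y)" by (simp add: Xset_def)
qed

lemma coeff_QQ: assumes fV: "finite V"
  shows "coeff (QQ V E \<alpha> F) x = int (card {\<kappa>\<in>C2 V E \<alpha> F. c1 V \<kappa> = x})"
proof -
  have "coeff (QQ V E \<alpha> F) x = (\<Sum>\<kappa>\<in>C2 V E \<alpha> F. if c1 V \<kappa> = x then 1 else 0)"
    by (simp add: QQ_def coeff_sum coeff_monom)
  also have "\<dots> = int (card {\<kappa>\<in>C2 V E \<alpha> F. c1 V \<kappa> = x})"
    using finite_C2[OF fV] by (simp add: sum.If_cases Int_def conj_commute)
  finally show ?thesis .
qed

lemma Xcoef_v2: assumes fV: "finite V"
  shows "Xcoef V E \<alpha> (v2 x y) = (if x + y = (\<Sum>v\<in>V. \<alpha> v) then coeff (QQ V E \<alpha> (\<lambda>_. {})) x else 0)"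
proof (cases "x + y = (\<Sum>v\<in>V. \<alpha> v)")
  case True
  have "{\<kappa>\<in>C2 V E \<alpha> (\<lambda>_. {}). c1 V \<kappa> = x \<and> c2 V \<kappa> = y} = {\<kappa>\<in>C2 V E \<alpha> (\<lambda>_. {}). c1 V \<kappa> = x}"
  proof (intro set_eqI iffI)
    fix \<kappa> assume "\<kappa> \<in> {\<kappa>\<in>C2 V E \<alpha> (\<lambda>_. {}). c1 V \<kappa> = x}"
    then have k: "\<kappa> \<in> C2 V E \<alpha> (\<lambda>_. {})" "c1 V \<kappa> = x" by auto
    then have "c2 V \<kappa> = y" using c12_sum[OF fV k(1)] True by linarith
    then show "\<kappa> \<in> {\<kappa>\<in>C2 V E \<alpha> (\<lambda>_. {}). c1 V \<kappa> = x \<and> c2 V \<kappa> = y}" using k by simp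
  qed simp
  then show ?thesis using True unfolding Xcoef_Xset Xset_v2[OF fV] coeff_QQ[OF fV] by simp
next
  case False
  have E0: "{\<kappa>\<in>C2 V E \<alpha> (\<lambda>_. {}). c1 V \<kappa> = x \<and> c2 V \<kappa> = y} = {}"
  proof (rule equals0I)
    fix \<kappa> assume "\<kappa> \<in> {\<kappa>\<in>C2 V E \<alpha> (\<lambda>_. {}). c1 V \<kappa> = x \<and> c2 V \<kappa> = y}"
    then have k: "\<kappa> \<in> C2 V E \<alpha> (\<lambda>_. {})" "c1 V \<kappa> = x" "c2 V \<kappa> = y" by auto
    then show False using c12_sum[OF fV k(1)] False by linarith
  qed
  show ?thesis using False unfolding Xcoef_Xset Xset_v2[OF fV] E0 by simp
qed


lemma sub12_cases: assumes "S \<subseteq> {1::nat,2}" shows "S = {} \<or> S = {1} \<or> S = {2} \<or> S = {1,2}"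
proof (cases "1 \<in> S"; cases "2 \<in> S")
  assume "1 \<in> S" "2 \<in> S" then have "S = {1,2}" using assms by auto then show ?thesis by simp
next
  assume "1 \<in> S" "2 \<notin> S" then have "S = {1}" using assms by auto then show ?thesis by simp
next
  assume "1 \<notin> S" "2 \<in> S" then have "S = {2}" using assms by auto then show ?thesis by simp
next
  assume "1 \<notin> S" "2 \<notin> S" then have "S = {}" using assms by auto then show ?thesis by simp
qed

lemma opts_list: "opts m G = set (filter (\<lambda>S. card S = m \<and> S \<inter> G = {}) [{}, {1}, {2}, {1,2}])"
proof (intro set_eqI iffI)
  fix S assume S: "S \<in> opts m G"
  then have "S \<subseteq> {1,2}" by (simp add: opts_def)
  then have d: "S = {} \<or> S = {1} \<or> S = {2} \<or> S = {1,2}" by (rule sub12_cases)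
  have c: "card S = m \<and> S \<inter> G = {}" using S by (simp add: opts_def)
  have d': "S \<in> set [{}, {1}, {2}, {1,2}]" using d by auto
  have "S \<in> {x \<in> set [{}, {1}, {2}, {1,2}]. card x = m \<and> x \<inter> G = {}}" using d' c by blast
  then show "S \<in> set (filter (\<lambda>S. card S = m \<and> S \<inter> G = {}) [{}, {1}, {2}, {1,2}])"
    by (simp only: set_filter)
next
  fix S assume a: "S \<in> set (filter (\<lambda>S. card S = m \<and> S \<inter> G = {}) [{}, {1}, {2}, {1,2}])"
  have d: "S \<in> set [{}, {1}, {2}, {1,2}]" using a by (simp only: set_filter mem_Collect_eq)
  have c: "card S = m \<and> S \<inter> G = {}" using a by (simp only: set_filter mem_Collect_eq)
  have "S \<subseteq> {1,2}"
  proof -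
    have "S = {} \<or> S = {1} \<or> S = {2} \<or> S = {1,2}" using d by (simp only: list.set insert_iff empty_iff simp_thms)
    then show ?thesis by (elim disjE) auto
  qed
  then show "S \<in> opts m G" using c unfolding opts_def by simp
qed

lemma sum_opts: "sum f (opts m G) = sum_list (map f (filter (\<lambda>S. card S = m \<and> S \<inter> G = {}) [{}, {1}, {2}, {1,2}]))"
proof -
  have "distinct (filter (\<lambda>S. card S = m \<and> S \<inter> G = {}) [{}, {1::nat}, {2}, {1,2}])"
    by (intro distinct_filter) simp
  then show ?thesis unfolding opts_list by (rule sum.distinct_set_conv_list)
qed

definition legpoly :: "nat \<Rightarrow> nat \<Rightarrow> nat set \<Rightarrow> int poly" where
  "legpoly a1 a2 t = (\<Sum>s\<in>opts a1 t. monom 1 (if 1 \<in> s then 1 else 0) *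
                        (\<Sum>s'\<in>opts a2 s. monom 1 (if 1 \<in> s' then 1 else 0)))"

definition xx :: "int poly" where "xx = monom 1 1"

lemma one_xx: "1 + xx = [:1,1:]" by (rule poly_eqI) (simp add: xx_def coeff_monom coeff_pCons split: nat.split)

lemma lp00: "legpoly 0 0 t = 1" by (simp add: legpoly_def sum_opts)
lemma lp01: "legpoly 0 (Suc 0) t = [:1,1:]"
  by (simp add: legpoly_def sum_opts one_xx[symmetric] xx_def)
lemma lp02: "legpoly 0 2 t = xx" by (simp add: legpoly_def sum_opts xx_def)
lemma lp10_1: "legpoly (Suc 0) 0 {Suc 0} = 1" by (simp add: legpoly_def sum_opts)
lemma lp10_2: "legpoly (Suc 0) 0 {2} = xx" by (simp add: legpoly_def sum_opts xx_def)
lemma lp10_0: "legpoly (Suc 0) 0 {} = [:1,1:]"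
  by (simp add: legpoly_def sum_opts one_xx[symmetric] xx_def)
lemma lp11_1: "legpoly (Suc 0) (Suc 0) {Suc 0} = xx" by (simp add: legpoly_def sum_opts xx_def)
lemma lp11_2: "legpoly (Suc 0) (Suc 0) {2} = xx" by (simp add: legpoly_def sum_opts xx_def)
lemma lp11_0: "legpoly (Suc 0) (Suc 0) {} = smult 2 xx"
proof -
  have "legpoly (Suc 0) (Suc 0) {} = xx + xx" by (simp add: legpoly_def sum_opts xx_def)
  also have "\<dots> = smult 2 xx" unfolding xx_def by (simp only: smult_monom add_monom) simp
  finally show ?thesis .
qed
lemma lp20_0: "legpoly 2 0 {} = xx" by (simp add: legpoly_def sum_opts xx_def)


lemma spider_verts_fin: "finite (spider_verts m)" by (simp add: spider_verts_def)

lemma forest_verts_Sigma: "forest_verts p n = Sigma {..<p} (\<lambda>i. spider_verts (n i))"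
  by (auto simp: forest_verts_def)

lemma forest_verts_fin: "finite (forest_verts p n)"
  unfolding forest_verts_Sigma by (simp add: spider_verts_fin)

lemma spider_adj_simps:
  "spider_adj m Torso (Inner j) \<longleftrightarrow> j \<in> {1..m}"
  "spider_adj m (Inner j) Torso \<longleftrightarrow> j \<in> {1..m}"
  "spider_adj m (Inner j) (Outer j') \<longleftrightarrow> j = j' \<and> j \<in> {1..m}"
  "spider_adj m (Outer j') (Inner j) \<longleftrightarrow> j = j' \<and> j \<in> {1..m}"
  "\<not> spider_adj m Torso Torso" "\<not> spider_adj m Torso (Outer j)" "\<not> spider_adj m (Outer j) Torso"
  "\<not> spider_adj m (Inner j) (Inner j')" "\<not> spider_adj m (Outer j) (Outer j')"
  by (auto simp: spider_adj_def)

lemma spider_adj_irrefl: "\<not> spider_adj m u u"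
  by (cases u) (auto simp: spider_adj_simps)

lemma forest_adj_pair: "forest_adj n (i,u) (i',w) \<longleftrightarrow> i = i' \<and> spider_adj (n i) u w"
  by (auto simp: forest_adj_def)

lemma forest_QQ: "QQ (forest_verts p n) (forest_adj n) \<alpha> F = (\<Prod>i<p. QQ ({i} \<times> spider_verts (n i)) (forest_adj n) \<alpha> F)"
proof (induction p)
  case 0
  have "forest_verts 0 n = {}" by (simp add: forest_verts_def)
  then show ?case by (simp add: QQ_empty)
next
  case (Suc p)
  have eq: "forest_verts (Suc p) n = forest_verts p n \<union> ({p} \<times> spider_verts (n p))"
    by (auto simp: forest_verts_def less_Suc_eq)
  have "QQ (forest_verts (Suc p) n) (forest_adj n) \<alpha> F =
        QQ (forest_verts p n) (forest_adj n) \<alpha> F * QQ ({p} \<times> spider_verts (n p)) (forest_adj n) \<alpha> F"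
    unfolding eq
  proof (rule QQ_union)
    show "finite (forest_verts p n)" by (rule forest_verts_fin)
    show "finite ({p} \<times> spider_verts (n p))" by (simp add: spider_verts_fin)
    show "forest_verts p n \<inter> {p} \<times> spider_verts (n p) = {}" by (auto simp: forest_verts_def)
    fix u w assume "u \<in> forest_verts p n" "w \<in> {p} \<times> spider_verts (n p)"
    then have "fst u \<noteq> fst w" by (auto simp: forest_verts_def)
    then show "\<not> forest_adj n u w \<and> \<not> forest_adj n w u" by (auto simp: forest_adj_def)
  qed
  then show ?case using Suc by simp
qed

definition leg :: "nat \<Rightarrow> nat \<Rightarrow> (nat \<times> spv) set" where "leg i j = {(i, Inner j), (i, Outer j)}"

lemma legs_QQ: "finite Js \<Longrightarrow> QQ (\<Union>j\<in>Js. leg i j) (forest_adj n) \<alpha> F = (\<Prod>j\<in>Js. QQ (leg i j) (forest_adj n) \<alpha> F)"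
proof (induction Js rule: finite_induct)
  case empty
  then show ?case by (simp add: QQ_empty)
next
  case (insert j Js)
  have "QQ (leg i j \<union> (\<Union>j\<in>Js. leg i j)) (forest_adj n) \<alpha> F =
        QQ (leg i j) (forest_adj n) \<alpha> F * QQ (\<Union>j\<in>Js. leg i j) (forest_adj n) \<alpha> F"
  proof (rule QQ_union)
    show "finite (leg i j)" by (simp add: leg_def)
    show "finite (\<Union>j\<in>Js. leg i j)" using insert by (simp add: leg_def)
    show "leg i j \<inter> (\<Union>j\<in>Js. leg i j) = {}" using insert by (auto simp: leg_def)
    fix u w assume u: "u \<in> leg i j" and w: "w \<in> (\<Union>j\<in>Js. leg i j)"
    then obtain j' where j': "j' \<in> Js" "w \<in> leg i j'" by auto
    then have "j' \<noteq> j" using insert by auto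
    then show "\<not> forest_adj n u w \<and> \<not> forest_adj n w u"
      using u j' by (auto simp: leg_def forest_adj_pair spider_adj_simps)
  qed
  then show ?case using insert by simp
qed

lemma leg_QQ: assumes j: "j \<in> {1..n i}"
  shows "QQ (leg i j) (forest_adj n) \<alpha> F =
    (\<Sum>s\<in>opts (\<alpha>(i,Inner j)) (F(i,Inner j)). monom 1 (if 1 \<in> s then 1 else 0) *
       (\<Sum>s'\<in>opts (\<alpha>(i,Outer j)) (F(i,Outer j) \<union> s). monom 1 (if 1 \<in> s' then 1 else 0)))"
proof -
  have "QQ (leg i j) (forest_adj n) \<alpha> F =
    (\<Sum>s\<in>opts (\<alpha>(i,Inner j)) (F(i,Inner j)). monom 1 (if 1 \<in> s then 1 else 0) *
       QQ (leg i j - {(i,Inner j)}) (forest_adj n) \<alpha>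
         (\<lambda>v. F v \<union> (if forest_adj n (i,Inner j) v \<or> forest_adj n v (i,Inner j) then s else {})))"
    by (rule QQ_elim) (auto simp: leg_def forest_adj_pair spider_adj_irrefl)
  also have "\<dots> = (\<Sum>s\<in>opts (\<alpha>(i,Inner j)) (F(i,Inner j)). monom 1 (if 1 \<in> s then 1 else 0) *
       (\<Sum>s'\<in>opts (\<alpha>(i,Outer j)) (F(i,Outer j) \<union> s). monom 1 (if 1 \<in> s' then 1 else 0)))"
  proof (rule sum.cong[OF refl])
    fix s :: "nat set"
    define F1 where "F1 = (\<lambda>v. F v \<union> (if forest_adj n (i,Inner j) v \<or> forest_adj n v (i,Inner j) then s else {}))"
    have l: "leg i j - {(i,Inner j)} = {(i,Outer j)}" by (auto simp: leg_def)
    have F1o: "F1 (i,Outer j) = F(i,Outer j) \<union> s" using j by (simp add: F1_def forest_adj_pair spider_adj_simps)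
    have "QQ {(i,Outer j)} (forest_adj n) \<alpha> F1 =
      (\<Sum>s'\<in>opts (\<alpha>(i,Outer j)) (F1 (i,Outer j)). monom 1 (if 1 \<in> s' then 1 else 0) *
        QQ ({(i,Outer j)} - {(i,Outer j)}) (forest_adj n) \<alpha>
          (\<lambda>v. F1 v \<union> (if forest_adj n (i,Outer j) v \<or> forest_adj n v (i,Outer j) then s' else {})))"
      by (rule QQ_elim) (auto simp: forest_adj_pair spider_adj_irrefl)
    also have "\<dots> = (\<Sum>s'\<in>opts (\<alpha>(i,Outer j)) (F(i,Outer j) \<union> s). monom 1 (if 1 \<in> s' then 1 else 0))"
      by (simp add: QQ_empty F1o)
    finally show "monom 1 (if 1 \<in> s then 1 else 0) *
       QQ (leg i j - {(i,Inner j)}) (forest_adj n) \<alpha>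
         (\<lambda>v. F v \<union> (if forest_adj n (i,Inner j) v \<or> forest_adj n v (i,Inner j) then s else {})) =
       monom 1 (if 1 \<in> s then 1 else 0) *
       (\<Sum>s'\<in>opts (\<alpha>(i,Outer j)) (F(i,Outer j) \<union> s). monom 1 (if 1 \<in> s' then 1 else 0))"
      unfolding l F1_def[symmetric] by simp
  qed
  finally show ?thesis .
qed

lemma spider_QQ:
  "QQ ({i} \<times> spider_verts (n i)) (forest_adj n) \<alpha> (\<lambda>_. {}) =
   (\<Sum>t\<in>opts (\<alpha>(i,Torso)) {}. monom 1 (if 1 \<in> t then 1 else 0) *
      (\<Prod>j\<in>{1..n i}. legpoly (\<alpha>(i,Inner j)) (\<alpha>(i,Outer j)) t))"
proof -
  have "QQ ({i} \<times> spider_verts (n i)) (forest_adj n) \<alpha> (\<lambda>_. {}) =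
    (\<Sum>t\<in>opts (\<alpha>(i,Torso)) {}. monom 1 (if 1 \<in> t then 1 else 0) *
       QQ ({i} \<times> spider_verts (n i) - {(i,Torso)}) (forest_adj n) \<alpha>
         (\<lambda>v. {} \<union> (if forest_adj n (i,Torso) v \<or> forest_adj n v (i,Torso) then t else {})))"
    by (rule QQ_elim) (auto simp: spider_verts_def forest_adj_pair spider_adj_irrefl)
  also have "\<dots> = (\<Sum>t\<in>opts (\<alpha>(i,Torso)) {}. monom 1 (if 1 \<in> t then 1 else 0) *
      (\<Prod>j\<in>{1..n i}. legpoly (\<alpha>(i,Inner j)) (\<alpha>(i,Outer j)) t))"
  proof (rule sum.cong[OF refl])
    fix t :: "nat set"
    define Ft where "Ft = (\<lambda>v. {} \<union> (if forest_adj n (i,Torso) v \<or> forest_adj n v (i,Torso) then t else {}))"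
    have eq: "{i} \<times> spider_verts (n i) - {(i,Torso)} = (\<Union>j\<in>{1..n i}. leg i j)"
      by (auto simp: spider_verts_def leg_def)
    have "QQ (\<Union>j\<in>{1..n i}. leg i j) (forest_adj n) \<alpha> Ft = (\<Prod>j\<in>{1..n i}. QQ (leg i j) (forest_adj n) \<alpha> Ft)"
      by (rule legs_QQ) simp
    also have "\<dots> = (\<Prod>j\<in>{1..n i}. legpoly (\<alpha>(i,Inner j)) (\<alpha>(i,Outer j)) t)"
    proof (rule prod.cong[OF refl])
      fix j assume j: "j \<in> {1..n i}"
      have a: "Ft (i,Inner j) = t" using j by (simp add: Ft_def forest_adj_pair spider_adj_simps)
      have b: "Ft (i,Outer j) = {}" by (simp add: Ft_def forest_adj_pair spider_adj_simps)
      show "QQ (leg i j) (forest_adj n) \<alpha> Ft = legpoly (\<alpha>(i,Inner j)) (\<alpha>(i,Outer j)) t"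
        unfolding leg_QQ[where n=n and i=i and j=j, OF j] a b legpoly_def by simp
    qed
    finally show "monom 1 (if 1 \<in> t then 1 else 0) *
       QQ ({i} \<times> spider_verts (n i) - {(i,Torso)}) (forest_adj n) \<alpha>
         (\<lambda>v. {} \<union> (if forest_adj n (i,Torso) v \<or> forest_adj n v (i,Torso) then t else {})) =
      monom 1 (if 1 \<in> t then 1 else 0) * (\<Prod>j\<in>{1..n i}. legpoly (\<alpha>(i,Inner j)) (\<alpha>(i,Outer j)) t)"
      unfolding eq Ft_def[symmetric] by simp
  qed
  finally show ?thesis .
qed


lemma opts1e': "opts (Suc 0) {} = {{Suc 0},{2}}" by (simp add: opts_list)
lemma opts0': "opts 0 {} = {{}}" by (simp add: opts_list)
lemma su_1X': "su (Suc 0) [:1,1:]" using su_1X by simp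
lemma su_X': "su (Suc (Suc 0)) (monom 1 (Suc 0))" using su_X by (simp add: numeral_2_eq_2)

lemma sum_two: "a \<noteq> b \<Longrightarrow> (\<Sum>x\<in>{a,b}. f x) = f a + (f b :: 'c::comm_monoid_add)" by simp

lemma prod_smult: "finite A \<Longrightarrow> (\<Prod>j\<in>A. smult (c j) (f j)) = smult (\<Prod>j\<in>A. c j) (\<Prod>j\<in>A. (f j :: int poly))"
  by (induction A rule: finite_induct) (simp_all add: mult_smult_left mult_smult_right ac_simps)

lemma xx_pow: "xx ^ k = monom 1 k" by (simp add: xx_def monom_power)

context
  fixes m k :: nat and a :: "spv \<Rightarrow> nat"
  assumes inA: "in_A m k a"
begin

definition "JJ = spJ m a"
definition "PP = (\<Prod>j\<in>{1..m} - JJ. legpoly (a (Inner j)) (a (Outer j)) {Suc 0})"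
definition "CC = (\<Prod>j\<in>{1..m} - JJ. (if a (Inner j) = 1 then 2 else 1 :: int))"
definition "degP = (\<Sum>j\<in>{1..m} - JJ. a (Inner j) + a (Outer j))"

lemma JJ_sub: "JJ \<subseteq> {1..m}" by (auto simp: JJ_def spJ_def)
lemma JJ_fin: "finite JJ" using JJ_sub finite_subset by blast
lemma JJ_card: "card JJ = k" using inA by (simp add: in_A_def JJ_def)
lemma aT: "a Torso = 1" using inA by (simp add: in_A_def)
lemma JJ_vals: "j \<in> JJ \<Longrightarrow> a (Inner j) = 1 \<and> a (Outer j) = 0" by (simp add: JJ_def spJ_def)

lemma nonJ_cases: assumes j: "j \<in> {1..m} - JJ"
  shows "(a (Inner j) = 0 \<and> a (Outer j) = 0) \<or> (a (Inner j) = 0 \<and> a (Outer j) = 1) \<or>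
         (a (Inner j) = 0 \<and> a (Outer j) = 2) \<or> (a (Inner j) = 1 \<and> a (Outer j) = 1)"
proof -
  have "a (Inner j) \<le> 1" "a (Inner j) + a (Outer j) \<le> 2" using inA j by (auto simp: in_A_def)
  moreover have "\<not> (a (Inner j) = 1 \<and> a (Outer j) = 0)" using j by (auto simp: JJ_def spJ_def)
  ultimately show ?thesis by linarith
qed

lemma lp_nonJ: assumes j: "j \<in> {1..m} - JJ"
  shows "legpoly (a (Inner j)) (a (Outer j)) {2} = legpoly (a (Inner j)) (a (Outer j)) {Suc 0}"
    and "legpoly (a (Inner j)) (a (Outer j)) {} = smult (if a (Inner j) = 1 then 2 else 1) (legpoly (a (Inner j)) (a (Outer j)) {Suc 0})"
    and "su (a (Inner j) + a (Outer j)) (legpoly (a (Inner j)) (a (Outer j)) {Suc 0})"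
  using nonJ_cases[OF j]
  by (auto simp: lp00 lp01 lp02 lp11_1 lp11_2 lp11_0 su_one su_1X' xx_def su_X')

lemma su_PP: "su degP PP"
  unfolding PP_def degP_def by (rule su_prod) (auto intro: lp_nonJ(3))

lemma CC_ge: "1 \<le> CC"
  unfolding CC_def by (rule prod_ge_1) auto

lemma prod_split: "(\<Prod>j\<in>{1..m}. g j) = (\<Prod>j\<in>{1..m} - JJ. g j) * (\<Prod>j\<in>JJ. (g j :: int poly))"
  by (rule prod.subset_diff[OF JJ_sub]) simp

lemma sum_split: "(\<Sum>j\<in>{1..m}. g j) = (\<Sum>j\<in>{1..m} - JJ. g j) + (\<Sum>j\<in>JJ. (g j :: nat))"
  by (rule sum.subset_diff[OF JJ_sub]) simp

lemma SQ_alpha: assumes k1: "1 \<le> k"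
  shows "(\<Sum>t\<in>opts (a Torso) {}. monom 1 (if 1 \<in> t then 1 else 0) * (\<Prod>j\<in>{1..m}. legpoly (a (Inner j)) (a (Outer j)) t))
     = PP * (xx * (1 + monom 1 (k - 1)))"
proof -
  have p1: "(\<Prod>j\<in>{1..m}. legpoly (a (Inner j)) (a (Outer j)) {Suc 0}) = PP"
  proof -
    have "(\<Prod>j\<in>JJ. legpoly (a (Inner j)) (a (Outer j)) {Suc 0}) = 1"
      using JJ_vals by (simp add: lp10_1)
    then show ?thesis unfolding prod_split PP_def by simp
  qed
  have p2: "(\<Prod>j\<in>{1..m}. legpoly (a (Inner j)) (a (Outer j)) {2}) = PP * xx ^ k"
  proof -
    have "(\<Prod>j\<in>JJ. legpoly (a (Inner j)) (a (Outer j)) {2}) = (\<Prod>j\<in>JJ. xx)"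
      using JJ_vals by (simp add: lp10_2)
    also have "\<dots> = xx ^ k" using JJ_card by simp
    finally have "(\<Prod>j\<in>JJ. legpoly (a (Inner j)) (a (Outer j)) {2}) = xx ^ k" .
    moreover have "(\<Prod>j\<in>{1..m} - JJ. legpoly (a (Inner j)) (a (Outer j)) {2}) = PP"
      unfolding PP_def by (rule prod.cong[OF refl]) (rule lp_nonJ(1))
    ultimately show ?thesis unfolding prod_split by simp
  qed
  have "(\<Sum>t\<in>opts (a Torso) {}. monom 1 (if 1 \<in> t then 1 else 0) * (\<Prod>j\<in>{1..m}. legpoly (a (Inner j)) (a (Outer j)) t))
      = xx * PP + PP * xx ^ k"
    using aT p1 p2 by (simp add: opts1e' xx_def)
  also have "\<dots> = PP * (xx * (1 + monom 1 (k - 1)))"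
  proof -
    have "xx * monom 1 (k - 1) = monom 1 k" using k1 by (simp add: xx_def mult_monom)
    then have "xx * monom 1 (k - 1) = xx ^ k" by (simp only: xx_pow)
    then show ?thesis by (simp add: algebra_simps)
  qed
  finally show ?thesis .
qed

lemma deg_alpha: "(\<Sum>u\<in>spider_verts m. a u) = 1 + k + degP"
proof -
  have sv: "spider_verts m = insert Torso (Inner ` {1..m} \<union> Outer ` {1..m})" by (auto simp: spider_verts_def)
  have "(\<Sum>u\<in>spider_verts m. a u) = a Torso + ((\<Sum>u\<in>Inner ` {1..m}. a u) + (\<Sum>u\<in>Outer ` {1..m}. a u))"
    unfolding sv by (subst sum.insert) (auto intro: sum.union_disjoint)
  also have "\<dots> = 1 + (\<Sum>j\<in>{1..m}. a (Inner j) + a (Outer j))"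
    using aT by (simp add: sum.reindex inj_on_def sum.distrib)
  also have "\<dots> = 1 + k + degP"
  proof -
    have "(\<Sum>j\<in>JJ. a (Inner j) + a (Outer j)) = k" using JJ_vals JJ_card by simp
    then show ?thesis unfolding sum_split degP_def by simp
  qed
  finally show ?thesis .
qed

context
  fixes ai :: nat
  assumes ai: "1 \<le> ai" "ai \<le> k"
begin

definition "ia = sorted_list_of_set JJ ! (ai - 1)"

lemma ia_in: "ia \<in> JJ"
proof -
  have "ai - 1 < length (sorted_list_of_set JJ)" using ai JJ_card JJ_fin by simp
  then show ?thesis unfolding ia_def using JJ_fin by (metis nth_mem set_sorted_list_of_set)
qed

lemma phi_Torso: "phi m ai a Torso = 0" by (simp add: phi_def phiS_def)
lemma phi_Outer: "phi m ai a (Outer j) = a (Outer j)" by (simp add: phi_def phiS_def)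
lemma phi_Inner: "phi m ai a (Inner j) = (if j = ia then 2 else a (Inner j))"
proof -
  have "{ai} \<inter> {1..card (spJ m a)} = {ai}" using ai JJ_card by (auto simp: JJ_def)
  then show ?thesis by (simp add: phi_def phiS_def ia_def JJ_def)
qed

lemma SQ_beta: assumes k1: "1 \<le> k"
  shows "(\<Sum>t\<in>opts (phi m ai a Torso) {}. monom 1 (if 1 \<in> t then 1 else 0) *
            (\<Prod>j\<in>{1..m}. legpoly (phi m ai a (Inner j)) (phi m ai a (Outer j)) t))
     = smult CC (PP * (xx * [:1,1:] ^ (k - 1)))"
proof -
  have nonJ: "(\<Prod>j\<in>{1..m} - JJ. legpoly (phi m ai a (Inner j)) (phi m ai a (Outer j)) {}) = smult CC PP"
  proof -
    have "(\<Prod>j\<in>{1..m} - JJ. legpoly (phi m ai a (Inner j)) (phi m ai a (Outer j)) {}) =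
          (\<Prod>j\<in>{1..m} - JJ. smult (if a (Inner j) = 1 then 2 else 1) (legpoly (a (Inner j)) (a (Outer j)) {Suc 0}))"
    proof (rule prod.cong[OF refl])
      fix j assume j: "j \<in> {1..m} - JJ"
      then have "j \<noteq> ia" using ia_in by auto
      then show "legpoly (phi m ai a (Inner j)) (phi m ai a (Outer j)) {} =
          smult (if a (Inner j) = 1 then 2 else 1) (legpoly (a (Inner j)) (a (Outer j)) {Suc 0})"
        using lp_nonJ(2)[OF j] by (simp add: phi_Inner phi_Outer)
    qed
    also have "\<dots> = smult CC PP" unfolding CC_def PP_def by (simp add: prod_smult)
    finally show ?thesis .
  qed
  have J: "(\<Prod>j\<in>JJ. legpoly (phi m ai a (Inner j)) (phi m ai a (Outer j)) {}) = xx * [:1,1:] ^ (k - 1)"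
  proof -
    have "(\<Prod>j\<in>JJ. legpoly (phi m ai a (Inner j)) (phi m ai a (Outer j)) {}) =
          legpoly (phi m ai a (Inner ia)) (phi m ai a (Outer ia)) {} *
          (\<Prod>j\<in>JJ - {ia}. legpoly (phi m ai a (Inner j)) (phi m ai a (Outer j)) {})"
      by (rule prod.remove[OF JJ_fin ia_in])
    also have "legpoly (phi m ai a (Inner ia)) (phi m ai a (Outer ia)) {} = xx"
      using JJ_vals[OF ia_in] by (simp add: phi_Inner phi_Outer lp20_0)
    also have "(\<Prod>j\<in>JJ - {ia}. legpoly (phi m ai a (Inner j)) (phi m ai a (Outer j)) {}) = (\<Prod>j\<in>JJ - {ia}. [:1,1:])"
    proof (rule prod.cong[OF refl])
      fix j assume j: "j \<in> JJ - {ia}"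
      then show "legpoly (phi m ai a (Inner j)) (phi m ai a (Outer j)) {} = [:1,1:]"
        using JJ_vals[of j] by (simp add: phi_Inner phi_Outer lp10_0)
    qed
    also have "\<dots> = [:1,1:] ^ (k - 1)" using JJ_card JJ_fin ia_in by simp
    finally show ?thesis .
  qed
  have "(\<Sum>t\<in>opts (phi m ai a Torso) {}. monom 1 (if 1 \<in> t then 1 else 0) *
            (\<Prod>j\<in>{1..m}. legpoly (phi m ai a (Inner j)) (phi m ai a (Outer j)) t))
      = (\<Prod>j\<in>{1..m}. legpoly (phi m ai a (Inner j)) (phi m ai a (Outer j)) {})"
    by (simp add: phi_Torso opts0')
  also have "\<dots> = smult CC PP * (xx * [:1,1:] ^ (k - 1))" unfolding prod_split nonJ J ..
  also have "\<dots> = smult CC (PP * (xx * [:1,1:] ^ (k - 1)))" by simp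
  finally show ?thesis .
qed

lemma deg_beta: assumes k1: "1 \<le> k" shows "(\<Sum>u\<in>spider_verts m. phi m ai a u) = 1 + k + degP"
proof -
  have sv: "spider_verts m = insert Torso (Inner ` {1..m} \<union> Outer ` {1..m})" by (auto simp: spider_verts_def)
  have "(\<Sum>u\<in>spider_verts m. phi m ai a u) = phi m ai a Torso + ((\<Sum>u\<in>Inner ` {1..m}. phi m ai a u) + (\<Sum>u\<in>Outer ` {1..m}. phi m ai a u))"
    unfolding sv by (subst sum.insert) (auto intro: sum.union_disjoint)
  also have "\<dots> = (\<Sum>j\<in>{1..m}. phi m ai a (Inner j) + phi m ai a (Outer j))"
    by (simp add: sum.reindex inj_on_def sum.distrib phi_Torso)
  also have "\<dots> = (\<Sum>j\<in>{1..m} - JJ. phi m ai a (Inner j) + phi m ai a (Outer j)) + (\<Sum>j\<in>JJ. phi m ai a (Inner j) + phi m ai a (Outer j))"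
    by (rule sum_split)
  also have "(\<Sum>j\<in>{1..m} - JJ. phi m ai a (Inner j) + phi m ai a (Outer j)) = degP"
    unfolding degP_def using ia_in by (intro sum.cong) (auto simp: phi_Inner phi_Outer)
  also have "(\<Sum>j\<in>JJ. phi m ai a (Inner j) + phi m ai a (Outer j)) = 1 + k"
  proof -
    have "(\<Sum>j\<in>JJ. phi m ai a (Inner j) + phi m ai a (Outer j)) =
          (phi m ai a (Inner ia) + phi m ai a (Outer ia)) + (\<Sum>j\<in>JJ - {ia}. phi m ai a (Inner j) + phi m ai a (Outer j))"
      by (rule sum.remove[OF JJ_fin ia_in])
    also have "(\<Sum>j\<in>JJ - {ia}. phi m ai a (Inner j) + phi m ai a (Outer j)) = (\<Sum>j\<in>JJ - {ia}. 1)"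
      by (rule sum.cong[OF refl]) (use JJ_vals in \<open>auto simp: phi_Inner phi_Outer\<close>)
    also have "\<dots> = k - 1" using JJ_card JJ_fin ia_in by simp
    finally show ?thesis using JJ_vals[OF ia_in] k1 by (simp add: phi_Inner phi_Outer)
  qed
  finally show ?thesis by simp
qed

end
end


lemma forest_sum: "(\<Sum>v\<in>forest_verts p n. f v) = (\<Sum>i<p. \<Sum>u\<in>spider_verts (n i). f (i,u))"
  unfolding forest_verts_Sigma by (subst sum.Sigma) (auto simp: spider_verts_fin)

lemma main_su:
  fixes p :: nat and n k a :: "nat \<Rightarrow> nat"
    and \<alpha> \<beta> :: "nat \<times> spv \<Rightarrow> nat"
  assumes hA: "\<forall>i<p. in_A (n i) (k i) (\<lambda>u. \<alpha> (i, u))"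
    and hk: "\<forall>i<p. 3 \<le> k i"
    and ha: "\<forall>i<p. 1 \<le> a i \<and> a i \<le> k i"
    and hbeta: "\<forall>i<p. \<forall>u. \<beta> (i, u) = phi (n i) (a i) (\<lambda>u. \<alpha> (i, u)) u"
  shows "su (\<Sum>v\<in>forest_verts p n. \<alpha> v)
           (QQ (forest_verts p n) (forest_adj n) \<alpha> (\<lambda>_. {}) + QQ (forest_verts p n) (forest_adj n) \<beta> (\<lambda>_. {}))"
    and "(\<Sum>v\<in>forest_verts p n. \<beta> v) = (\<Sum>v\<in>forest_verts p n. \<alpha> v)"
proof -
  define P where "P i = PP (n i) (\<lambda>u. \<alpha> (i, u))" for i
  define C where "C i = CC (n i) (\<lambda>u. \<alpha> (i, u))" for i
  define dP where "dP i = degP (n i) (\<lambda>u. \<alpha> (i, u))" for i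
  define ns where "ns i = k i - 1" for i
  have spA: "QQ ({i} \<times> spider_verts (n i)) (forest_adj n) \<alpha> (\<lambda>_. {}) = P i * (monom 1 1 * (1 + monom 1 (ns i)))"
    if i: "i < p" for i
  proof -
    have "QQ ({i} \<times> spider_verts (n i)) (forest_adj n) \<alpha> (\<lambda>_. {}) =
      (\<Sum>t\<in>opts (\<alpha>(i,Torso)) {}. monom 1 (if 1 \<in> t then 1 else 0) *
        (\<Prod>j\<in>{1..n i}. legpoly (\<alpha>(i,Inner j)) (\<alpha>(i,Outer j)) t))" by (rule spider_QQ)
    also have "\<dots> = PP (n i) (\<lambda>u. \<alpha> (i, u)) * (xx * (1 + monom 1 (k i - 1)))"
    proof -
      have Ai: "in_A (n i) (k i) (\<lambda>u. \<alpha> (i, u))" using hA i by simp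
      have k3: "3 \<le> k i" using hk i by simp
      then have k1: "1 \<le> k i" by simp
      show ?thesis by (rule SQ_alpha[OF Ai k1])
    qed
    finally show ?thesis by (simp add: P_def ns_def xx_def)
  qed
  have spB: "QQ ({i} \<times> spider_verts (n i)) (forest_adj n) \<beta> (\<lambda>_. {}) = smult (C i) (P i * (monom 1 1 * [:1,1:] ^ (ns i)))"
    if i: "i < p" for i
  proof -
    have bi: "\<beta> (i, u) = phi (n i) (a i) (\<lambda>u. \<alpha> (i, u)) u" for u using hbeta i by simp
    have "QQ ({i} \<times> spider_verts (n i)) (forest_adj n) \<beta> (\<lambda>_. {}) =
      (\<Sum>t\<in>opts (\<beta>(i,Torso)) {}. monom 1 (if 1 \<in> t then 1 else 0) *
        (\<Prod>j\<in>{1..n i}. legpoly (\<beta>(i,Inner j)) (\<beta>(i,Outer j)) t))" by (rule spider_QQ)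
    also have "\<dots> = (\<Sum>t\<in>opts (phi (n i) (a i) (\<lambda>u. \<alpha> (i, u)) Torso) {}. monom 1 (if 1 \<in> t then 1 else 0) *
        (\<Prod>j\<in>{1..n i}. legpoly (phi (n i) (a i) (\<lambda>u. \<alpha> (i, u)) (Inner j)) (phi (n i) (a i) (\<lambda>u. \<alpha> (i, u)) (Outer j)) t))"
      unfolding bi ..
    also have "\<dots> = smult (CC (n i) (\<lambda>u. \<alpha> (i, u))) (PP (n i) (\<lambda>u. \<alpha> (i, u)) * (xx * [:1,1:] ^ (k i - 1)))"
    proof -
      have Ai: "in_A (n i) (k i) (\<lambda>u. \<alpha> (i, u))" using hA i by simp
      have k3: "3 \<le> k i" using hk i by simp
      then have k1: "1 \<le> k i" by simp
      have a1: "1 \<le> a i" and a2: "a i \<le> k i" using ha i by auto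
      show ?thesis by (rule SQ_beta[OF Ai a1 a2 k1])
    qed
    finally show ?thesis by (simp add: P_def C_def ns_def xx_def)
  qed
  have QA: "QQ (forest_verts p n) (forest_adj n) \<alpha> (\<lambda>_. {}) =
      (\<Prod>i<p. P i) * (\<Prod>i<p. monom 1 1 * (1 + monom 1 (ns i)))"
    unfolding forest_QQ prod.distrib[symmetric] by (rule prod.cong[OF refl]) (simp add: spA)
  have QB: "QQ (forest_verts p n) (forest_adj n) \<beta> (\<lambda>_. {}) =
      smult (\<Prod>i<p. C i) ((\<Prod>i<p. P i) * (\<Prod>i<p. monom 1 1 * [:1,1:] ^ (ns i)))"
  proof -
    have "QQ (forest_verts p n) (forest_adj n) \<beta> (\<lambda>_. {}) = (\<Prod>i<p. smult (C i) (P i * (monom 1 1 * [:1,1:] ^ (ns i))))"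
      unfolding forest_QQ by (rule prod.cong[OF refl]) (simp add: spB)
    also have "\<dots> = smult (\<Prod>i<p. C i) (\<Prod>i<p. P i * (monom 1 1 * [:1,1:] ^ (ns i)))"
      by (rule prod_smult) simp
    finally show ?thesis by (simp add: prod.distrib)
  qed
  have sP: "su (\<Sum>i<p. dP i) (\<Prod>i<p. P i)"
    by (rule su_prod) (use hA in \<open>auto simp: P_def dP_def intro: su_PP\<close>)
  have C1: "1 \<le> (\<Prod>i<p. C i)" by (rule prod_ge_1) (use hA CC_ge in \<open>auto simp: C_def\<close>)
  have sC: "su (\<Sum>i<p. ns i + 2) ((\<Prod>i<p. monom 1 1 * (1 + monom 1 (ns i))) + smult (\<Prod>i<p. C i) (\<Prod>i<p. monom 1 1 * [:1,1:]^(ns i)))"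
    by (rule core) (use hk C1 in \<open>auto simp: ns_def\<close>)
  have dA: "(\<Sum>v\<in>forest_verts p n. \<alpha> v) = (\<Sum>i<p. dP i) + (\<Sum>i<p. ns i + 2)"
  proof -
    have "(\<Sum>v\<in>forest_verts p n. \<alpha> v) = (\<Sum>i<p. \<Sum>u\<in>spider_verts (n i). \<alpha> (i,u))" by (rule forest_sum)
    also have "\<dots> = (\<Sum>i<p. dP i + (ns i + 2))"
    proof (rule sum.cong[OF refl])
      fix i assume "i \<in> {..<p}"
      then have i: "i < p" by simp
      have Ai: "in_A (n i) (k i) (\<lambda>u. \<alpha> (i, u))" using hA i by simp
      have k1: "3 \<le> k i" using hk i by simp
      show "(\<Sum>u\<in>spider_verts (n i). \<alpha> (i,u)) = dP i + (ns i + 2)"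
        using deg_alpha[OF Ai] k1 by (simp add: dP_def ns_def)
    qed
    finally show ?thesis by (simp only: sum.distrib)
  qed
  show "(\<Sum>v\<in>forest_verts p n. \<beta> v) = (\<Sum>v\<in>forest_verts p n. \<alpha> v)"
  proof -
    have "(\<Sum>v\<in>forest_verts p n. \<beta> v) = (\<Sum>i<p. \<Sum>u\<in>spider_verts (n i). \<beta> (i,u))" by (rule forest_sum)
    also have "\<dots> = (\<Sum>i<p. \<Sum>u\<in>spider_verts (n i). \<alpha> (i,u))"
    proof (rule sum.cong[OF refl])
      fix i assume "i \<in> {..<p}"
      then have i: "i < p" by simp
      have bi: "\<beta> (i, u) = phi (n i) (a i) (\<lambda>u. \<alpha> (i, u)) u" for u using hbeta i by simp
      have Ai: "in_A (n i) (k i) (\<lambda>u. \<alpha> (i, u))" using hA i by simp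
      have k3: "3 \<le> k i" using hk i by simp
      then have k1: "1 \<le> k i" by simp
      have a1: "1 \<le> a i" and a2: "a i \<le> k i" using ha i by auto
      show "(\<Sum>u\<in>spider_verts (n i). \<beta> (i,u)) = (\<Sum>u\<in>spider_verts (n i). \<alpha> (i,u))"
        unfolding bi using deg_alpha[OF Ai] deg_beta[OF Ai a1 a2 k1] by simp
    qed
    also have "\<dots> = (\<Sum>v\<in>forest_verts p n. \<alpha> v)" by (rule forest_sum[symmetric])
    finally show ?thesis .
  qed
  have "QQ (forest_verts p n) (forest_adj n) \<alpha> (\<lambda>_. {}) + QQ (forest_verts p n) (forest_adj n) \<beta> (\<lambda>_. {}) =
     (\<Prod>i<p. P i) * ((\<Prod>i<p. monom 1 1 * (1 + monom 1 (ns i))) + smult (\<Prod>i<p. C i) (\<Prod>i<p. monom 1 1 * [:1,1:]^(ns i)))"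
    unfolding QA QB by (simp add: distrib_left)
  moreover have "su ((\<Sum>i<p. dP i) + (\<Sum>i<p. ns i + 2))
     ((\<Prod>i<p. P i) * ((\<Prod>i<p. monom 1 1 * (1 + monom 1 (ns i))) + smult (\<Prod>i<p. C i) (\<Prod>i<p. monom 1 1 * [:1,1:]^(ns i))))"
    by (rule su_mult[OF sP sC])
  ultimately show "su (\<Sum>v\<in>forest_verts p n. \<alpha> v)
           (QQ (forest_verts p n) (forest_adj n) \<alpha> (\<lambda>_. {}) + QQ (forest_verts p n) (forest_adj n) \<beta> (\<lambda>_. {}))"
    unfolding dA by simp
qed

theorem mainTheorem12:
  fixes p :: nat and n k a :: "nat \<Rightarrow> nat"
    and \<alpha> \<beta> :: "nat \<times> spv \<Rightarrow> nat"
  assumes hA: "\<forall>i<p. in_A (n i) (k i) (\<lambda>u. \<alpha> (i, u))"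
    and hk: "\<forall>i<p. 3 \<le> k i"
    and ha: "\<forall>i<p. 1 \<le> a i \<and> a i \<le> k i"
    and hbeta: "\<forall>i<p. \<forall>u. \<beta> (i, u) = phi (n i) (a i) (\<lambda>u. \<alpha> (i, u)) u"
  shows "ge_2s (\<lambda>e. Xcoef (forest_verts p n) (forest_adj n) \<alpha> e
                   + Xcoef (forest_verts p n) (forest_adj n) \<beta> e)"
proof -
  define V where "V = forest_verts p n"
  define E where "E = forest_adj n"
  define f where "f = (\<lambda>e. Xcoef V E \<alpha> e + Xcoef V E \<beta> e)"
  define D where "D = (\<Sum>v\<in>V. \<alpha> v)"
  define Q where "Q = QQ V E \<alpha> (\<lambda>_. {}) + QQ V E \<beta> (\<lambda>_. {})"
  have fV: "finite V" unfolding V_def by (rule forest_verts_fin)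
  have suQ: "su D Q" and DB: "(\<Sum>v\<in>V. \<beta> v) = D"
    using main_su[OF hA hk ha hbeta] unfolding D_def Q_def V_def E_def by auto
  have sym: "\<forall>e\<in>monomials. \<forall>i\<ge>1. f (e \<circ> tr i) = f e"
  proof (intro ballI allI impI)
    fix e :: "nat \<Rightarrow> nat" and i :: nat assume i: "1 \<le> i"
    show "f (e \<circ> tr i) = f e" unfolding f_def using Xcoef_tr[OF i, of V E \<alpha> e] Xcoef_tr[OF i, of V E \<beta> e] by simp
  qed
  have ex: "schur_expansion f (cc f)" by (rule schur_exists[OF sym])
  have nonneg: "0 \<le> f e" for e by (simp add: f_def Xcoef_def)
  have fv2: "f (v2 x y) = (if x + y = D then coeff Q x else 0)" for x y
    unfolding f_def Xcoef_v2[OF fV] DB Q_def D_def by simp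
  have mono: "f (v2 (Suc x) (y - 1)) \<le> f (v2 x y)" if y1: "1 \<le> y" and yx: "y \<le> x" for x y
  proof (cases "x + y = D")
    case True
    have sy: "\<And>j. j \<le> D \<Longrightarrow> coeff Q (D - j) = coeff Q j"
      and un: "\<And>j. 2*j+2 \<le> D \<Longrightarrow> coeff Q j \<le> coeff Q (Suc j)" using suQ by (auto simp: su_def)
    have h: "coeff Q (D - (y - 1)) = coeff Q (y - 1)" by (rule sy) (use True in simp)
    have e: "D - (y - 1) = Suc x" using True y1 by simp
    have "coeff Q (Suc x) = coeff Q (y - 1)" using h unfolding e .
    also have "\<dots> \<le> coeff Q (Suc (y - 1))" using un[of "y - 1"] True y1 yx by simp
    also have "Suc (y - 1) = y" using y1 by simp
    also have "coeff Q y = coeff Q x"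
    proof -
      have h2: "coeff Q (D - x) = coeff Q x" by (rule sy) (use True in simp)
      have e2: "D - x = y" using True by simp
      show ?thesis using h2 unfolding e2 .
    qed
    finally show ?thesis using True y1 by (simp add: fv2)
  next
    case False
    then show ?thesis using y1 by (simp add: fv2)
  qed
  have "ge_2s f"
    unfolding ge_2s_def
  proof (intro exI conjI allI impI)
    show "schur_expansion f (cc f)" by (rule ex)
    fix la assume la: "is_partition la \<and> length la \<le> 2"
    show "0 \<le> cc f la"
    proof (cases la)
      case Nil
      then show ?thesis using cc_nval0[of la f] nonneg by (simp add: nval_def)
    next
      case (Cons x rest)
      show ?thesis
      proof (cases rest)
        case Nil
        then show ?thesis using cc_nval0[of la f] nonneg Cons by (simp add: nval_def)
      next
        case (Cons y rest2)
        then have "rest2 = []" using la \<open>la = x # rest\<close> by simp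
        then have l: "la = [x,y]" using Cons \<open>la = x # rest\<close> by simp
        then have y1: "1 \<le> y" and yx: "y \<le> x" using la by (auto simp: is_partition_def)
        have "cc f la = f (v2 x y) - f (v2 (Suc x) (y - 1))" unfolding l by (rule cc_two[OF sym y1 yx])
        then show ?thesis using mono[OF y1 yx] by simp
      qed
    qed
  qed
  then show ?thesis by (simp add: f_def V_def E_def)
qed


end
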